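(* Every U(1)-invariant operation $\mathcal{E}$ on $\mathcal{H}'$ admits a Kraus decomposition $\{K_{k,\alpha}\}$, with $k\in\mathbb{Z}$ and $\alpha$ an integer (multiplicity) index, such that $$K_{k,\alpha}=S_k\tilde K_{k,\alpha},\qquad \tilde K_{k,\alpha}=\sum_{n}c^{(k,\alpha)}_n|n\rangle\langle n|,\qquad S_k=\sum_{n=\max\{0,-k\}}^{\infty}|n+k\rangle\langle n|,$$ for some complex coefficients $c_n^{(k,\alpha)}$. Thus $\tilde K_{k,\alpha}$ changes the relative amplitudes of the number states (possibly eliminating some) and $S_k$ shifts the number upward by $k$ (downward by $|k|$ if $k<0$). The coefficients satisfy $\sum_{k,\alpha}|c_n^{(k,\alpha)}|^2\le 1$ for all $n$, with equality for all $n$ if $\mathcal{E}$ is trace-preserving.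
   Context: Let $\mathcal{H}'$ be the Hilbert space with orthonormal basis $\{|n\rangle: n=0,1,2,\dots\}$, let $\hat N=\sum_n n|n\rangle\langle n|$, and let U(1) act by $T(\phi)=e^{i\phi\hat N}$, $\phi\in[0,2\pi)$. A U(1)-invariant operation is a completely positive, trace-nonincreasing linear map $\mathcal{E}$ on (trace-class) operators on $\mathcal{H}'$ such that $\mathcal{E}(T(\phi)XT(\phi)^\dagger)=T(\phi)\mathcal{E}(X)T(\phi)^\dagger$ for all $\phi$ and all $X$. A Kraus decomposition of $\mathcal{E}$ is a family of operators $\{K_i\}$ with $\mathcal{E}(X)=\sum_iK_iXK_i^\dagger$. *)

theory Defs
  imports "HOL-Analysis.Analysis"
begin

text \<open>Operators on H' = l2(N) are represented by their matrix elements
  A m n = <m|A|n> with respect to the orthonormal basis {|n>}.\<close>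

type_synonym mat = "nat \<Rightarrow> nat \<Rightarrow> complex"

definition mat_mult :: "mat \<Rightarrow> mat \<Rightarrow> mat" where
  "mat_mult A B = (\<lambda>i j. \<Sum>\<^sub>\<infinity>p. A i p * B p j)"

definition mat_adj :: "mat \<Rightarrow> mat" where
  "mat_adj A = (\<lambda>i j. cnj (A j i))"

definition mat_add :: "mat \<Rightarrow> mat \<Rightarrow> mat" where
  "mat_add A B = (\<lambda>i j. A i j + B i j)"

definition mat_scale :: "complex \<Rightarrow> mat \<Rightarrow> mat" where
  "mat_scale a A = (\<lambda>i j. a * A i j)"

definition hilbert_schmidt :: "mat \<Rightarrow> bool" where
  "hilbert_schmidt A \<longleftrightarrow> (\<lambda>(i,j). (cmod (A i j))\<^sup>2) summable_on UNIV"

definition trace_class :: "mat \<Rightarrow> bool" where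
  "trace_class A \<longleftrightarrow> (\<exists>B C. hilbert_schmidt B \<and> hilbert_schmidt C \<and> A = mat_mult B C)"

definition mat_trace :: "mat \<Rightarrow> complex" where
  "mat_trace A = (\<Sum>\<^sub>\<infinity>i. A i i)"

text \<open>Positivity (tested on finitely supported vectors; for bounded operators
  this is equivalent to positivity on all of H').\<close>
definition positive_op :: "mat \<Rightarrow> bool" where
  "positive_op A \<longleftrightarrow> (\<forall>F v. finite F \<longrightarrow>
     (let s = (\<Sum>i\<in>F. \<Sum>j\<in>F. cnj (v i) * A i j * v j) in Im s = 0 \<and> 0 \<le> Re s))"

text \<open>Positivity of an N x N block operator matrix (X i j), i.e. an operator on
  C^N (x) H'.\<close>
definition positive_block :: "nat \<Rightarrow> (nat \<Rightarrow> nat \<Rightarrow> mat) \<Rightarrow> bool" where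
  "positive_block N X \<longleftrightarrow> (\<forall>F (v :: nat \<Rightarrow> nat \<Rightarrow> complex). finite F \<longrightarrow>
     (let s = (\<Sum>i<N. \<Sum>j<N. \<Sum>p\<in>F. \<Sum>q\<in>F. cnj (v i p) * X i j p q * v j q)
      in Im s = 0 \<and> 0 \<le> Re s))"

definition operation :: "(mat \<Rightarrow> mat) \<Rightarrow> bool" where
  "operation E \<longleftrightarrow>
     (\<forall>X. trace_class X \<longrightarrow> trace_class (E X)) \<and>
     (\<forall>A B a b. trace_class A \<longrightarrow> trace_class B \<longrightarrow>
        E (mat_add (mat_scale a A) (mat_scale b B)) = mat_add (mat_scale a (E A)) (mat_scale b (E B))) \<and>
     (\<forall>N X. (\<forall>i j. trace_class (X i j)) \<longrightarrow> positive_block N X \<longrightarrow>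
        positive_block N (\<lambda>i j. E (X i j))) \<and>
     (\<forall>X. trace_class X \<longrightarrow> positive_op X \<longrightarrow> Re (mat_trace (E X)) \<le> Re (mat_trace X))"

definition trace_preserving :: "(mat \<Rightarrow> mat) \<Rightarrow> bool" where
  "trace_preserving E \<longleftrightarrow> (\<forall>X. trace_class X \<longrightarrow> mat_trace (E X) = mat_trace X)"

text \<open>Conjugation by T(phi) = exp(i phi N): matrix element (m,n) gets the phase
  exp(i phi (m - n)).\<close>
definition U1_conj :: "real \<Rightarrow> mat \<Rightarrow> mat" where
  "U1_conj \<phi> X = (\<lambda>m n. exp (\<i> * complex_of_real (\<phi> * (real m - real n))) * X m n)"

definition U1_invariant :: "(mat \<Rightarrow> mat) \<Rightarrow> bool" where
  "U1_invariant E \<longleftrightarrow> (\<forall>\<phi> X. 0 \<le> \<phi> \<longrightarrow> \<phi> < 2 * pi \<longrightarrow> trace_class X \<longrightarrow>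
      E (U1_conj \<phi> X) = U1_conj \<phi> (E X))"

definition shift_op :: "int \<Rightarrow> mat" where
  "shift_op k = (\<lambda>m n. if int m = int n + k then 1 else 0)"

definition diag_op :: "(nat \<Rightarrow> complex) \<Rightarrow> mat" where
  "diag_op c = (\<lambda>m n. if m = n then c n else 0)"

definition kraus_term :: "mat \<Rightarrow> mat \<Rightarrow> mat" where
  "kraus_term K X = mat_mult (mat_mult K X) (mat_adj K)"

end

theory Submission
  imports Defs
begin


lemma infsum_single_pt:
  fixes f :: "'a \<Rightarrow> 'b::{comm_monoid_add,t2_space}"
  assumes "\<And>x. x \<noteq> a \<Longrightarrow> f x = 0"
  shows "infsum f UNIV = f a"
proof -
  have "infsum f UNIV = infsum f {a}" by (rule infsum_cong_neutral) (use assms in auto)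
  then show ?thesis by simp
qed

lemma has_sum_single_pt:
  fixes f :: "'a \<Rightarrow> 'b::{comm_monoid_add,t2_space}"
  assumes "\<And>x. x \<noteq> a \<Longrightarrow> f x = 0"
  shows "(f has_sum f a) UNIV"
  by (rule has_sum_finite_neutralI[of "{a}"]) (use assms in auto)

lemma has_sum_finsum:
  fixes f :: "'i \<Rightarrow> 'a \<Rightarrow> 'b::topological_comm_monoid_add"
  assumes "finite I" "\<And>i. i \<in> I \<Longrightarrow> (f i has_sum s i) A"
  shows "((\<lambda>r. \<Sum>i\<in>I. f i r) has_sum (\<Sum>i\<in>I. s i)) A"
  using assms
proof (induction I rule: finite_induct)
  case empty then show ?case by simp
next
  case (insert x F)
  then show ?case by (simp add: has_sum_add)
qed

definition hsn :: "mat \<Rightarrow> real" where "hsn B = (\<Sum>\<^sub>\<infinity>(i,j). (cmod (B i j))\<^sup>2)"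
definition rown :: "mat \<Rightarrow> nat \<Rightarrow> real" where "rown B i = (\<Sum>\<^sub>\<infinity>r. (cmod (B i r))\<^sup>2)"
definition coln :: "mat \<Rightarrow> nat \<Rightarrow> real" where "coln B j = (\<Sum>\<^sub>\<infinity>r. (cmod (B r j))\<^sup>2)"

lemma hs_has_sum: "hilbert_schmidt B \<Longrightarrow> ((\<lambda>(i,j). (cmod (B i j))\<^sup>2) has_sum hsn B) UNIV"
  unfolding hilbert_schmidt_def hsn_def by (simp add: has_sum_infsum)

lemma hs_row_has_sum: assumes "hilbert_schmidt B" shows "((\<lambda>r. (cmod (B i r))\<^sup>2) has_sum rown B i) UNIV"
proof -
  have "(\<lambda>(i,r). (cmod (B i r))\<^sup>2) summable_on Sigma UNIV (\<lambda>_. UNIV)"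
    using assms unfolding hilbert_schmidt_def by (simp add: UNIV_Times_UNIV)
  from summable_on_SigmaD1[OF this, of i] show ?thesis unfolding rown_def by (simp add: has_sum_infsum)
qed

lemma hs_swap: assumes "hilbert_schmidt B" shows "((\<lambda>(j,i). (cmod (B i j))\<^sup>2) has_sum hsn B) UNIV"
proof -
  have "((\<lambda>(i,j). (cmod (B i j))\<^sup>2) has_sum hsn B) (UNIV \<times> UNIV)"
    using hs_has_sum[OF assms] by (simp add: UNIV_Times_UNIV)
  then have "((\<lambda>(x,y). (\<lambda>(i,j). (cmod (B i j))\<^sup>2) (y,x)) has_sum hsn B) (UNIV \<times> UNIV)"
    by (subst (asm) has_sum_swap) 
  then show ?thesis by (simp add: UNIV_Times_UNIV case_prod_unfold)
qed

lemma hs_col_has_sum: assumes "hilbert_schmidt B" shows "((\<lambda>r. (cmod (B r j))\<^sup>2) has_sum coln B j) UNIV"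
proof -
  have "(\<lambda>(j,r). (cmod (B r j))\<^sup>2) summable_on Sigma UNIV (\<lambda>_. UNIV)"
    using hs_swap[OF assms] by (simp add: UNIV_Times_UNIV has_sum_imp_summable)
  from summable_on_SigmaD1[OF this, of j] show ?thesis unfolding coln_def by (simp add: has_sum_infsum)
qed

lemma hs_rows: assumes "hilbert_schmidt B" shows "(rown B has_sum hsn B) UNIV"
proof -
  have "((\<lambda>(i,j). (cmod (B i j))\<^sup>2) has_sum hsn B) (Sigma UNIV (\<lambda>_. UNIV))"
    using hs_has_sum[OF assms] by (simp add: UNIV_Times_UNIV)
  from has_sum_SigmaD[OF this] show ?thesis using hs_row_has_sum[OF assms] by simp
qed

lemma hs_cols: assumes "hilbert_schmidt B" shows "(coln B has_sum hsn B) UNIV"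
proof -
  have "((\<lambda>(j,i). (cmod (B i j))\<^sup>2) has_sum hsn B) (Sigma UNIV (\<lambda>_. UNIV))"
    using hs_swap[OF assms] by (simp add: UNIV_Times_UNIV)
  from has_sum_SigmaD[OF this] show ?thesis using hs_col_has_sum[OF assms] by simp
qed

lemma rown_nonneg: "0 \<le> rown B i" unfolding rown_def by (rule infsum_nonneg) simp
lemma coln_nonneg: "0 \<le> coln B i" unfolding coln_def by (rule infsum_nonneg) simp
lemma hsn_nonneg: "0 \<le> hsn B" unfolding hsn_def by (rule infsum_nonneg) auto

lemma sum_rown_le: assumes "hilbert_schmidt B" "finite P" shows "sum (rown B) P \<le> hsn B"
  by (rule finite_sum_le_has_sum[OF hs_rows[OF assms(1)]]) (use assms rown_nonneg in auto)
lemma sum_coln_le: assumes "hilbert_schmidt B" "finite P" shows "sum (coln B) P \<le> hsn B"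
  by (rule finite_sum_le_has_sum[OF hs_cols[OF assms(1)]]) (use assms coln_nonneg in auto)

lemma amgm_t: fixes a b t :: real assumes "t > 0" shows "a * b \<le> (t\<^sup>2 * a\<^sup>2 + b\<^sup>2 / t\<^sup>2) / 2"
proof -
  have "0 \<le> (t*a - b/t)\<^sup>2" by simp
  also have "(t*a - b/t)\<^sup>2 = t\<^sup>2 * a\<^sup>2 - 2*a*b + b\<^sup>2/t\<^sup>2" using assms
    by (simp add: power2_eq_square field_simps)
  finally show ?thesis by simp
qed

lemma mm_entry:
  assumes B: "hilbert_schmidt B" and C: "hilbert_schmidt C" and t: "t > 0"
  shows "(\<lambda>r. norm (B p r * C r q)) summable_on UNIV"
    and "cmod (mat_mult B C p q) \<le> (t\<^sup>2 * rown B p + coln C q / t\<^sup>2) / 2"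
proof -
  let ?g = "\<lambda>r. (t\<^sup>2 * (cmod (B p r))\<^sup>2 + (cmod (C r q))\<^sup>2 / t\<^sup>2) / 2"
  have "((\<lambda>r. t\<^sup>2 * (cmod (B p r))\<^sup>2) has_sum t\<^sup>2 * rown B p) UNIV"
    using has_sum_cmult_right[OF hs_row_has_sum[OF B]] by simp
  moreover have "((\<lambda>r. (cmod (C r q))\<^sup>2 / t\<^sup>2) has_sum coln C q / t\<^sup>2) UNIV"
    using has_sum_divide_const[OF hs_col_has_sum[OF C]] by simp
  ultimately have "((\<lambda>r. t\<^sup>2 * (cmod (B p r))\<^sup>2 + (cmod (C r q))\<^sup>2 / t\<^sup>2) has_sum (t\<^sup>2 * rown B p + coln C q / t\<^sup>2)) UNIV"
    by (rule has_sum_add)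
  from has_sum_divide_const[OF this, of 2]
  have g: "(?g has_sum (t\<^sup>2 * rown B p + coln C q / t\<^sup>2) / 2) UNIV" .
  have le: "norm (B p r * C r q) \<le> ?g r" for r
    using amgm_t[OF t, of "cmod (B p r)" "cmod (C r q)"] by (simp add: norm_mult)
  show abs: "(\<lambda>r. norm (B p r * C r q)) summable_on UNIV"
    by (rule summable_on_comparison_test[OF has_sum_imp_summable[OF g]]) (use le in auto)
  have "cmod (mat_mult B C p q) \<le> (\<Sum>\<^sub>\<infinity>r. norm (B p r * C r q))"
    unfolding mat_mult_def by (rule norm_infsum_bound[OF abs])
  also have "\<dots> \<le> infsum ?g UNIV"
    by (rule infsum_mono[OF abs has_sum_imp_summable[OF g]]) (use le in auto)
  also have "\<dots> = (t\<^sup>2 * rown B p + coln C q / t\<^sup>2) / 2" using g by (simp add: infsumI)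
  finally show "cmod (mat_mult B C p q) \<le> (t\<^sup>2 * rown B p + coln C q / t\<^sup>2) / 2" .
qed

lemma cnj_mult_self: "cnj z * z = complex_of_real ((cmod z)\<^sup>2)"
  by (metis complex_norm_square mult.commute of_real_power)

lemma psd2:
  fixes a b c d :: complex
  assumes H: "\<And>x y. 0 \<le> cnj x * a * x + cnj x * b * y + cnj y * c * x + cnj y * d * y"
  shows "(cmod b)\<^sup>2 \<le> Re a * Re d" and "0 \<le> Re a" and "0 \<le> Re d"
proof -
  have h10: "0 \<le> a" using H[of 1 0] by simp
  have h01: "0 \<le> d" using H[of 0 1] by simp
  have h11: "0 \<le> a + b + c + d" using H[of 1 1] by simp
  have h1i: "0 \<le> a + \<i> * b - \<i> * c + d" using H[of 1 \<i>] by (simp add: algebra_simps)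
  have ia: "Im a = 0" "0 \<le> Re a" using h10 by (auto simp: less_eq_complex_def)
  have id: "Im d = 0" "0 \<le> Re d" using h01 by (auto simp: less_eq_complex_def)
  show "0 \<le> Re a" "0 \<le> Re d" by (fact ia(2), fact id(2))
  have "Im (b + c) = 0" using h11 ia id by (auto simp: less_eq_complex_def)
  moreover have "Re b - Re c = 0" using h1i ia id by (auto simp: less_eq_complex_def)
  ultimately have c: "c = cnj b" by (simp add: complex_eq_iff)
  have a: "a = of_real (Re a)" and d: "d = of_real (Re d)" using ia id by (simp_all add: complex_eq_iff)
  have key: "0 \<le> s\<^sup>2 * (cmod b)\<^sup>2 * Re a - 2 * s * (cmod b)\<^sup>2 + Re d" for s :: real
  proof -
    have "0 \<le> cnj (- (of_real s * b)) * a * (- (of_real s * b)) + cnj (- (of_real s * b)) * b * 1 + cnj 1 * c * (- (of_real s * b)) + cnj 1 * d * 1"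
      by (rule H)
    also have "\<dots> = of_real (s\<^sup>2 * Re a) * (cnj b * b) - of_real (2 * s) * (cnj b * b) + of_real (Re d)"
      by (subst a, subst d, simp add: c algebra_simps power2_eq_square)
    also have "\<dots> = of_real (s\<^sup>2 * (cmod b)\<^sup>2 * Re a - 2 * s * (cmod b)\<^sup>2 + Re d)"
      by (simp add: cnj_mult_self)
    finally show ?thesis by (simp add: less_eq_complex_def)
  qed
  show "(cmod b)\<^sup>2 \<le> Re a * Re d"
  proof (cases "Re a = 0")
    case True
    show ?thesis
    proof (rule ccontr)
      assume "\<not> ?thesis"
      then have pos: "(cmod b)\<^sup>2 > 0" using True by simp
      define s where "s = (Re d + 1) / (2 * (cmod b)\<^sup>2)"
      have "0 \<le> - 2 * s * (cmod b)\<^sup>2 + Re d"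
        using key[of s] True by simp
      moreover have "2 * s * (cmod b)\<^sup>2 = Re d + 1" using pos by (simp add: s_def field_simps)
      ultimately show False by linarith
    qed
  next
    case False
    then have pos: "Re a > 0" using ia by simp
    have "0 \<le> (1 / Re a)\<^sup>2 * (cmod b)\<^sup>2 * Re a - 2 * (1/Re a) * (cmod b)\<^sup>2 + Re d"
      by (rule key)
    also have "\<dots> = Re d - (cmod b)\<^sup>2 / Re a" using pos by (simp add: field_simps power2_eq_square)
    finally show ?thesis using pos by (simp add: field_simps)
  qed
qed

lemma quad_delta:
  assumes "finite F" "m \<in> F" "n \<in> F"
  shows "(\<Sum>p\<in>F. \<Sum>q\<in>F. cnj (if p = m then x else 0) * A p q * (if q = n then y else 0)) = cnj x * A m n * y"
proof -
  have "(\<Sum>p\<in>F. \<Sum>q\<in>F. cnj (if p = m then x else 0) * A p q * (if q = n then y else 0))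
      = (\<Sum>p\<in>F. if p = m then (\<Sum>q\<in>F. if q = n then cnj x * A p q * y else 0) else 0)"
    by (rule sum.cong) (auto intro: sum.cong)
  also have "\<dots> = cnj x * A m n * y" using assms by (simp add: sum.delta')
  finally show ?thesis .
qed


lemma mat_adj_adj[simp]: "mat_adj (mat_adj B) = B" by (simp add: mat_adj_def)

lemma hs_adj: assumes "hilbert_schmidt B" shows "hilbert_schmidt (mat_adj B)" and "hsn (mat_adj B) = hsn B"
proof -
  have "((\<lambda>(i,j). (cmod (mat_adj B i j))\<^sup>2) has_sum hsn B) UNIV"
    using hs_swap[OF assms] by (simp add: mat_adj_def case_prod_unfold)
  then show "hilbert_schmidt (mat_adj B)" "hsn (mat_adj B) = hsn B"
    unfolding hilbert_schmidt_def hsn_def by (auto simp: has_sum_iff)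
qed

lemma tc_diag:
  assumes "trace_class A" shows "(\<lambda>i. norm (A i i)) summable_on UNIV" "(\<lambda>i. A i i) summable_on UNIV"
proof -
  obtain B C where B: "hilbert_schmidt B" and C: "hilbert_schmidt C" and A: "A = mat_mult B C"
    using assms unfolding trace_class_def by blast
  have "((\<lambda>i. rown B i + coln C i) has_sum (hsn B + hsn C)) UNIV"
    by (rule has_sum_add[OF hs_rows[OF B] hs_cols[OF C]])
  from has_sum_divide_const[OF this, of 2]
  have g: "((\<lambda>i. (rown B i + coln C i) / 2) has_sum (hsn B + hsn C) / 2) UNIV" .
  have le: "norm (A i i) \<le> (rown B i + coln C i) / 2" for i
    using mm_entry(2)[OF B C, of 1 i i] A by simp
  show ns: "(\<lambda>i. norm (A i i)) summable_on UNIV"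
    by (rule summable_on_comparison_test[OF has_sum_imp_summable[OF g]]) (use le in auto)
  show "(\<lambda>i. A i i) summable_on UNIV" by (rule abs_summable_summable[OF ns])
qed

lemma mm_summable:
  assumes B: "hilbert_schmidt B" and C: "hilbert_schmidt C"
  shows "(\<lambda>r. B p r * C r q) summable_on UNIV"
  by (rule abs_summable_summable[OF mm_entry(1)[OF B C, of 1]]) simp

lemma complex_nonneg_iff: "0 \<le> (z::complex) \<longleftrightarrow> Im z = 0 \<and> 0 \<le> Re z"
  by (auto simp: less_eq_complex_def)

lemma gram_block_pos:
  assumes Z: "\<And>i. hilbert_schmidt (Z i)"
  shows "positive_block N (\<lambda>i j. mat_mult (mat_adj (Z i)) (Z j))"
  unfolding positive_block_def Let_def
proof (intro allI impI)
  fix F :: "nat set" and v :: "nat \<Rightarrow> nat \<Rightarrow> complex"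
  assume F: "finite F"
  define w where "w r = (\<Sum>j<N. \<Sum>q\<in>F. Z j r q * v j q)" for r
  have trm: "((\<lambda>r. cnj (v i p) * (cnj (Z i r p) * Z j r q) * v j q) has_sum
      cnj (v i p) * mat_mult (mat_adj (Z i)) (Z j) p q * v j q) UNIV" for i j p q
  proof -
    have "((\<lambda>r. mat_adj (Z i) p r * Z j r q) has_sum mat_mult (mat_adj (Z i)) (Z j) p q) UNIV"
      unfolding mat_mult_def using mm_summable[OF hs_adj(1)[OF Z] Z] by (simp add: has_sum_infsum)
    from has_sum_cmult_left[OF has_sum_cmult_right[OF this, of "cnj (v i p)"], of "v j q"]
    show ?thesis by (simp add: mat_adj_def)
  qed
  have hs: "((\<lambda>r. \<Sum>i<N. \<Sum>j<N. \<Sum>p\<in>F. \<Sum>q\<in>F. cnj (v i p) * (cnj (Z i r p) * Z j r q) * v j q) has_sum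
     (\<Sum>i<N. \<Sum>j<N. \<Sum>p\<in>F. \<Sum>q\<in>F. cnj (v i p) * mat_mult (mat_adj (Z i)) (Z j) p q * v j q)) UNIV"
    by (intro has_sum_finsum trm F finite_lessThan)
  have eq: "(\<Sum>i<N. \<Sum>j<N. \<Sum>p\<in>F. \<Sum>q\<in>F. cnj (v i p) * (cnj (Z i r p) * Z j r q) * v j q) = cnj (w r) * w r" for r
  proof -
    have c: "cnj (w r) = (\<Sum>i<N. \<Sum>p\<in>F. cnj (v i p) * cnj (Z i r p))"
      by (simp add: w_def cnj_sum mult.commute)
    have "cnj (w r) * w r = (\<Sum>i<N. \<Sum>p\<in>F. cnj (v i p) * cnj (Z i r p) * w r)"
      unfolding c by (simp add: sum_distrib_right)
    also have "\<dots> = (\<Sum>i<N. \<Sum>p\<in>F. \<Sum>j<N. \<Sum>q\<in>F. cnj (v i p) * cnj (Z i r p) * (Z j r q * v j q))"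
      unfolding w_def by (simp add: sum_distrib_left)
    also have "\<dots> = (\<Sum>i<N. \<Sum>p\<in>F. \<Sum>j<N. \<Sum>q\<in>F. cnj (v i p) * (cnj (Z i r p) * Z j r q) * v j q)"
      by (simp add: mult_ac)
    also have "\<dots> = (\<Sum>i<N. \<Sum>j<N. \<Sum>p\<in>F. \<Sum>q\<in>F. cnj (v i p) * (cnj (Z i r p) * Z j r q) * v j q)"
      by (rule sum.cong[OF refl], rule sum.swap)
    finally show ?thesis by simp
  qed
  have hs2: "((\<lambda>r. cnj (w r) * w r) has_sum
     (\<Sum>i<N. \<Sum>j<N. \<Sum>p\<in>F. \<Sum>q\<in>F. cnj (v i p) * mat_mult (mat_adj (Z i)) (Z j) p q * v j q)) UNIV"
    using hs unfolding eq .
  have nn: "0 \<le> cnj (w r) * w r" for r by (simp add: cnj_mult_self complex_nonneg_iff)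
  have "0 \<le> (\<Sum>i<N. \<Sum>j<N. \<Sum>p\<in>F. \<Sum>q\<in>F. cnj (v i p) * mat_mult (mat_adj (Z i)) (Z j) p q * v j q)"
    using infsum_nonneg_complex[OF has_sum_imp_summable[OF hs2] nn] hs2 by (simp add: infsumI)
  then show "Im (\<Sum>i<N. \<Sum>j<N. \<Sum>p\<in>F. \<Sum>q\<in>F. cnj (v i p) * mat_mult (mat_adj (Z i)) (Z j) p q * v j q) = 0 \<and>
    0 \<le> Re (\<Sum>i<N. \<Sum>j<N. \<Sum>p\<in>F. \<Sum>q\<in>F. cnj (v i p) * mat_mult (mat_adj (Z i)) (Z j) p q * v j q)"
    by (simp add: complex_nonneg_iff)
qed

lemma l1: "{..<1::nat} = {0}" by auto

lemma pos_op_of_block1: assumes H: "positive_block 1 (\<lambda>_ _. A)" shows "positive_op A"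
  unfolding positive_op_def Let_def
proof (intro allI impI)
  fix F :: "nat set" and v :: "nat \<Rightarrow> complex" assume F: "finite F"
  from H[unfolded positive_block_def Let_def l1, rule_format, OF F, of "\<lambda>_. v"]
  show "Im (\<Sum>i\<in>F. \<Sum>j\<in>F. cnj (v i) * A i j * v j) = 0 \<and> 0 \<le> Re (\<Sum>i\<in>F. \<Sum>j\<in>F. cnj (v i) * A i j * v j)"
    by simp
qed

lemma pos_diag: "positive_op P \<Longrightarrow> Im (P i i) = 0 \<and> 0 \<le> Re (P i i)"
  unfolding positive_op_def Let_def
  by (drule spec[of _ "{i}"], drule spec[of _ "\<lambda>_. 1"]) simp

lemma fs_hs: "finite {(i,j). A i j \<noteq> 0} \<Longrightarrow> hilbert_schmidt A"
  unfolding hilbert_schmidt_def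
  by (rule finite_nonzero_values_imp_summable_on) (simp add: case_prod_unfold)

lemma fs_tc: assumes fin: "finite {(i,j). A i j \<noteq> 0}" shows "trace_class A"
proof -
  let ?S = "{(i,j). A i j \<noteq> 0}"
  have "finite (snd ` ?S)" using fin by simp
  then obtain N where N0: "snd ` ?S \<subseteq> {..<N}" using finite_nat_bounded by blast
  have N: "j < N" if "A i j \<noteq> 0" for i j
  proof -
    have "j \<in> snd ` ?S" using that by (intro image_eqI[of _ snd "(i,j)"]) auto
    then show ?thesis using N0 by auto
  qed
  define C :: mat where "C = (\<lambda>p j. if p = j \<and> j < N then 1 else 0)"
  have "finite {(p,j). C p j \<noteq> 0}"
    by (rule finite_subset[of _ "{..<N} \<times> {..<N}"]) (auto simp: C_def)
  then have C: "hilbert_schmidt C" by (rule fs_hs)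
  have eq: "mat_mult A C = A"
  proof (intro ext)
    fix i j
    have "mat_mult A C i j = A i j * C j j"
      unfolding mat_mult_def by (rule infsum_single_pt) (auto simp: C_def)
    also have "\<dots> = A i j" using N[of i j] by (auto simp: C_def)
    finally show "mat_mult A C i j = A i j" .
  qed
  show ?thesis unfolding trace_class_def
    by (intro exI[of _ A] exI[of _ C]) (use fs_hs[OF fin] C eq in auto)
qed

definition munit :: "nat \<Rightarrow> nat \<Rightarrow> mat" where "munit p q = (\<lambda>i j. if i = p \<and> j = q then 1 else 0)"

lemma unit_tc: "trace_class (munit p q)"
  by (rule fs_tc, rule finite_subset[of _ "{(p,q)}"]) (auto simp: munit_def)

lemma unit_hs: "hilbert_schmidt (munit p q)" and unit_hsn: "hsn (munit p q) = 1"
proof -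
  have "((\<lambda>(i,j). (cmod (munit p q i j))\<^sup>2) has_sum 1) UNIV"
    using has_sum_single_pt[where f="\<lambda>(i,j). (cmod (munit p q i j))\<^sup>2" and a="(p,q)"] by (auto simp: munit_def)
  then show "hilbert_schmidt (munit p q)" "hsn (munit p q) = 1"
    unfolding hilbert_schmidt_def hsn_def by (auto simp: has_sum_iff)
qed

lemma unit_mult: "mat_mult (munit p q) (munit q q) = munit p q"
proof (intro ext)
  fix i j show "mat_mult (munit p q) (munit q q) i j = munit p q i j"
    unfolding mat_mult_def by (subst infsum_single_pt[where a=q]) (auto simp: munit_def)
qed




lemma sum22: "(\<Sum>i<(2::nat). \<Sum>j<(2::nat). f i j) = f 0 0 + f 0 1 + f 1 0 + (f 1 1 :: complex)"
  by (simp add: numeral_2_eq_2)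

lemma hs_zero: "hilbert_schmidt (\<lambda>_ _. 0)" by (rule fs_hs) simp

lemma sqrt_amgm: fixes b x y :: real
  assumes "b\<^sup>2 \<le> x * y" "0 \<le> x" "0 \<le> y" "0 \<le> b" shows "b \<le> (x + y) / 2"
proof (rule ccontr)
  assume "\<not> b \<le> (x + y) / 2"
  then have lt: "(x + y) / 2 < b" by simp
  have "((x + y) / 2) * ((x + y) / 2) < b * b"
    using mult_strict_mono[OF lt lt] lt assms by (simp add: add_nonneg_nonneg)
  moreover have "((x + y) / 2) * ((x + y) / 2) = x * y + ((x - y) / 2) * ((x - y) / 2)"
    by (simp add: algebra_simps add_divide_distrib diff_divide_distrib)
  moreover have "0 \<le> ((x - y) / 2) * ((x - y) / 2)" by simp
  ultimately show False using assms(1) unfolding power2_eq_square by linarith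
qed

locale U1op =
  fixes E :: "mat \<Rightarrow> mat"
  assumes opE: "operation E" and invE: "U1_invariant E"
begin

lemmas opE_parts = opE[unfolded operation_def]
lemma tcE: "trace_class X \<Longrightarrow> trace_class (E X)" by (rule conjunct1[OF opE_parts, rule_format])
lemma linE: "trace_class A \<Longrightarrow> trace_class B \<Longrightarrow>
   E (mat_add (mat_scale a A) (mat_scale b B)) = mat_add (mat_scale a (E A)) (mat_scale b (E B))"
  by (rule conjunct1[OF conjunct2[OF opE_parts], rule_format])
lemma cpE: "(\<And>i j. trace_class (X i j)) \<Longrightarrow> positive_block N X \<Longrightarrow> positive_block N (\<lambda>i j. E (X i j))"
  by (rule conjunct1[OF conjunct2[OF conjunct2[OF opE_parts]], rule_format])
lemma trE: "trace_class X \<Longrightarrow> positive_op X \<Longrightarrow> Re (mat_trace (E X)) \<le> Re (mat_trace X)"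
  by (rule conjunct2[OF conjunct2[OF conjunct2[OF opE_parts]], rule_format])

lemma E_scale: assumes "trace_class A" shows "E (mat_scale a A) = mat_scale a (E A)"
proof -
  have "mat_add (mat_scale a A) (mat_scale 0 A) = mat_scale a A" by (simp add: mat_add_def mat_scale_def)
  moreover have "mat_add (mat_scale a (E A)) (mat_scale 0 (E A)) = mat_scale a (E A)" by (simp add: mat_add_def mat_scale_def)
  ultimately show ?thesis using linE[OF assms assms, of a 0] by simp
qed

lemma gram_tr: assumes Z: "hilbert_schmidt Z" shows "Re (E (mat_mult (mat_adj Z) Z) m m) \<le> hsn Z"
proof -
  let ?P = "mat_mult (mat_adj Z) Z"
  have tcP: "trace_class ?P" unfolding trace_class_def using hs_adj(1)[OF Z] Z by blast
  have blk: "positive_block 1 (\<lambda>_ _. ?P)" using gram_block_pos[of "\<lambda>_. Z" 1] Z by simp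
  have posP: "positive_op ?P" by (rule pos_op_of_block1[OF blk])
  have blkE: "positive_block 1 (\<lambda>_ _. E ?P)" using cpE[of "\<lambda>_ _. ?P" 1] tcP blk by simp
  have posEP: "positive_op (E ?P)" by (rule pos_op_of_block1[OF blkE])
  have diagP: "((\<lambda>i. ?P i i) has_sum of_real (hsn Z)) UNIV"
  proof -
    have "?P i i = of_real (coln Z i)" for i
    proof -
      have "((\<lambda>r. complex_of_real ((cmod (Z r i))\<^sup>2)) has_sum of_real (coln Z i)) UNIV"
        by (rule has_sum_of_real[OF hs_col_has_sum[OF Z]])
      moreover have "mat_adj Z i r * Z r i = complex_of_real ((cmod (Z r i))\<^sup>2)" for r
        by (simp add: mat_adj_def cnj_mult_self)
      ultimately show ?thesis unfolding mat_mult_def by (simp add: infsumI)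
    qed
    then show ?thesis using has_sum_of_real[OF hs_cols[OF Z]] by simp
  qed
  have trP: "Re (mat_trace ?P) = hsn Z" using diagP unfolding mat_trace_def by (simp add: infsumI)
  have tcEP: "trace_class (E ?P)" by (rule tcE[OF tcP])
  have smRe: "(\<lambda>i. Re (E ?P i i)) summable_on UNIV" by (rule summable_on_Re[OF tc_diag(2)[OF tcEP]])
  have "Re (E ?P m m) = sum (\<lambda>i. Re (E ?P i i)) {m}" by simp
  also have "\<dots> \<le> (\<Sum>\<^sub>\<infinity>i. Re (E ?P i i))"
    by (rule finite_sum_le_infsum[OF smRe]) (use pos_diag[OF posEP] in auto)
  also have "\<dots> = Re (mat_trace (E ?P))" unfolding mat_trace_def by (rule infsum_Re[OF tc_diag(2)[OF tcEP]])
  also have "\<dots> \<le> Re (mat_trace ?P)" by (rule trE[OF tcP posP])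
  finally show ?thesis using trP by simp
qed

lemma phi_sq:
  assumes B: "hilbert_schmidt B" and C: "hilbert_schmidt C"
  shows "(cmod (E (mat_mult B C) m n))\<^sup>2 \<le> hsn B * hsn C"
proof -
  define Z where "Z i = (if i = 0 then mat_adj B else if i = 1 then C else (\<lambda>_ _. 0))" for i :: nat
  have Zhs: "hilbert_schmidt (Z i)" for i
    unfolding Z_def using hs_adj(1)[OF B] C hs_zero by auto
  let ?X = "\<lambda>i j. mat_mult (mat_adj (Z i)) (Z j)"
  have tcX: "trace_class (?X i j)" for i j unfolding trace_class_def using hs_adj(1)[OF Zhs] Zhs by blast
  have PB: "positive_block 2 (\<lambda>i j. E (?X i j))" by (rule cpE[OF tcX gram_block_pos[OF Zhs]])
  define a where "a = E (?X 0 0) m m"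
  define b where "b = E (?X 0 1) m n"
  define c where "c = E (?X 1 0) n m"
  define d where "d = E (?X 1 1) n n"
  have form: "0 \<le> cnj x * a * x + cnj x * b * y + cnj y * c * x + cnj y * d * y" for x y
  proof -
    define v where "v i p = (if i = 0 then (if p = m then x else 0) else (if p = n then y else 0))" for i p :: nat
    have fin: "finite {m,n}" by simp
    from PB[unfolded positive_block_def Let_def, rule_format, OF fin, of v]
    have "0 \<le> (\<Sum>i<2. \<Sum>j<2. \<Sum>p\<in>{m,n}. \<Sum>q\<in>{m,n}. cnj (v i p) * E (?X i j) p q * v j q)"
      by (simp add: complex_nonneg_iff)
    also have "(\<Sum>i<2. \<Sum>j<2. \<Sum>p\<in>{m,n}. \<Sum>q\<in>{m,n}. cnj (v i p) * E (?X i j) p q * v j q)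
       = cnj x * a * x + cnj x * b * y + cnj y * c * x + cnj y * d * y"
      unfolding sum22 by (simp add: v_def quad_delta a_def b_def c_def d_def)
    finally show ?thesis .
  qed
  have P1: "(cmod b)\<^sup>2 \<le> Re a * Re d" and P2: "0 \<le> Re a" and P3: "0 \<le> Re d"
    using psd2[of a b c d] form by blast+
  have "Re a \<le> hsn B" unfolding a_def Z_def using gram_tr[OF hs_adj(1)[OF B]] hs_adj(2)[OF B] by simp
  moreover have "Re d \<le> hsn C" unfolding d_def Z_def using gram_tr[OF C] by simp
  moreover have "b = E (mat_mult B C) m n" unfolding b_def Z_def by simp
  ultimately show ?thesis using P1 P2 P3 mult_mono[of "Re a" "hsn B" "Re d" "hsn C"] hsn_nonneg[of C]
    by (metis order_trans)
qed

lemma phi_bound: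
  assumes B: "hilbert_schmidt B" and C: "hilbert_schmidt C" and t: "t > 0"
  shows "cmod (E (mat_mult B C) m n) \<le> (t\<^sup>2 * hsn B + hsn C / t\<^sup>2) / 2"
proof (rule sqrt_amgm)
  have "(t\<^sup>2 * hsn B) * (hsn C / t\<^sup>2) = hsn B * hsn C" using t by (simp add: field_simps)
  then show "(cmod (E (mat_mult B C) m n))\<^sup>2 \<le> (t\<^sup>2 * hsn B) * (hsn C / t\<^sup>2)"
    using phi_sq[OF B C, of m n] by simp
  show "0 \<le> t\<^sup>2 * hsn B" using hsn_nonneg[of B] by simp
  show "0 \<le> hsn C / t\<^sup>2" using hsn_nonneg[of C] by simp
qed simp

end



definition lin_fun :: "(mat \<Rightarrow> complex) \<Rightarrow> bool" where
  "lin_fun L \<longleftrightarrow> (\<forall>A B a b. trace_class A \<longrightarrow> trace_class B \<longrightarrow>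
     L (mat_add (mat_scale a A) (mat_scale b B)) = a * L A + b * L B)"

lemma tc_zero: "trace_class (\<lambda>_ _. 0)" by (rule fs_tc) simp

lemma lin_zero: assumes "lin_fun L" shows "L (\<lambda>_ _. 0) = 0"
proof -
  have "mat_add (mat_scale 0 (\<lambda>_ _. 0)) (mat_scale 0 (\<lambda>_ _. 0)) = (\<lambda>_ _. 0)"
    by (simp add: mat_add_def mat_scale_def)
  then show ?thesis using assms tc_zero unfolding lin_fun_def by (metis mult_zero_left add_0)
qed

lemma lin_fin:
  assumes L: "lin_fun L" and S: "finite S"
  shows "L (\<lambda>i j. \<Sum>x\<in>S. a x * munit (fst x) (snd x) i j) = (\<Sum>x\<in>S. a x * L (munit (fst x) (snd x)))"
  using S
proof (induction S rule: finite_induct)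
  case empty
  then show ?case using lin_zero[OF L] by simp
next
  case (insert x S)
  define M where "M = (\<lambda>i j. \<Sum>y\<in>S. a y * munit (fst y) (snd y) i j)"
  have "{(i,j). M i j \<noteq> 0} \<subseteq> S"
  proof
    fix z assume "z \<in> {(i,j). M i j \<noteq> 0}"
    then obtain i j where z: "z = (i,j)" and "M i j \<noteq> 0" by blast
    then obtain y where "y \<in> S" "a y * munit (fst y) (snd y) i j \<noteq> 0"
      unfolding M_def by (meson sum.neutral)
    then show "z \<in> S" using z by (auto simp: munit_def split: if_splits)
  qed
  then have tcM: "trace_class M" using insert(1) by (intro fs_tc) (rule finite_subset)
  have eq: "(\<lambda>i j. \<Sum>y\<in>insert x S. a y * munit (fst y) (snd y) i j) =
     mat_add (mat_scale (a x) (munit (fst x) (snd x))) (mat_scale 1 M)"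
    using insert(1,2) by (simp add: M_def mat_add_def mat_scale_def)
  show ?case unfolding eq
    using L[unfolded lin_fun_def, rule_format, OF unit_tc[of "fst x" "snd x"] tcM, of "a x" 1] insert(1,2,3)
    by (simp add: M_def)
qed

lemma fs_decomp:
  assumes fin: "finite S" and sub: "\<And>i j. F i j \<noteq> 0 \<Longrightarrow> (i,j) \<in> S"
  shows "F = (\<lambda>i j. \<Sum>x\<in>S. F (fst x) (snd x) * munit (fst x) (snd x) i j)"
proof (intro ext)
  fix i j
  have "(\<Sum>x\<in>S. F (fst x) (snd x) * munit (fst x) (snd x) i j) = (\<Sum>x\<in>S. if x = (i,j) then F i j else 0)"
    by (rule sum.cong) (auto simp: munit_def)
  also have "\<dots> = (if (i,j) \<in> S then F i j else 0)" using fin by (simp add: sum.delta')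
  also have "\<dots> = F i j" using sub[of i j] by auto
  finally show "F i j = (\<Sum>x\<in>S. F (fst x) (snd x) * munit (fst x) (snd x) i j)" by simp
qed

lemma lin_fs_zero:
  assumes L: "lin_fun L" and units: "\<And>p q. L (munit p q) = 0"
    and fin: "finite S" and sub: "\<And>i j. F i j \<noteq> 0 \<Longrightarrow> (i,j) \<in> S"
  shows "L F = 0"
proof -
  have "L F = L (\<lambda>i j. \<Sum>x\<in>S. F (fst x) (snd x) * munit (fst x) (snd x) i j)"
    using fs_decomp[OF fin sub] by (rule arg_cong)
  also have "\<dots> = (\<Sum>x\<in>S. F (fst x) (snd x) * L (munit (fst x) (snd x)))"
    by (rule lin_fin[OF L fin])
  also have "\<dots> = 0" by (simp add: units)
  finally show ?thesis .
qed

definition trunc :: "nat \<Rightarrow> mat \<Rightarrow> mat" where "trunc N B = (\<lambda>i j. if i < N \<and> j < N then B i j else 0)"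
definition rest :: "nat \<Rightarrow> mat \<Rightarrow> mat" where "rest N B = (\<lambda>i j. if i < N \<and> j < N then 0 else B i j)"

lemma hs_le:
  assumes B: "hilbert_schmidt B" and le: "\<And>i j. cmod (B' i j) \<le> cmod (B i j)"
  shows "hilbert_schmidt B'" "hsn B' \<le> hsn B"
proof -
  have le2: "(cmod (B' i j))\<^sup>2 \<le> (cmod (B i j))\<^sup>2" for i j using le[of i j] by (simp add: power_mono)
  show hs: "hilbert_schmidt B'" unfolding hilbert_schmidt_def
    by (rule summable_on_comparison_test[OF B[unfolded hilbert_schmidt_def]]) (use le2 in auto)
  show "hsn B' \<le> hsn B" unfolding hsn_def
    by (rule infsum_mono[OF hs[unfolded hilbert_schmidt_def] B[unfolded hilbert_schmidt_def]]) (use le2 in auto)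
qed

lemma hs_trunc: "hilbert_schmidt B \<Longrightarrow> hilbert_schmidt (trunc N B) \<and> hsn (trunc N B) \<le> hsn B"
  using hs_le[of B "trunc N B"] by (auto simp: trunc_def)
lemma hs_rest: "hilbert_schmidt B \<Longrightarrow> hilbert_schmidt (rest N B) \<and> hsn (rest N B) \<le> hsn B"
  using hs_le[of B "rest N B"] by (auto simp: rest_def)

lemma tail:
  assumes B: "hilbert_schmidt B" and d: "\<delta> > 0"
  shows "\<exists>N. \<forall>N'\<ge>N. hsn (rest N' B) \<le> \<delta>"
proof -
  let ?f = "\<lambda>(i,j). (cmod (B i j))\<^sup>2"
  obtain F where F: "finite F" "dist (sum ?f F) (hsn B) \<le> \<delta>"
    using has_sum_finite_approximation[OF hs_has_sum[OF B] d] by blast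
  have "finite (fst ` F \<union> snd ` F)" using F(1) by simp
  then obtain N where N: "fst ` F \<union> snd ` F \<subseteq> {..<N}" using finite_nat_bounded by blast
  have "hsn (rest N' B) \<le> \<delta>" if NN: "N' \<ge> N" for N'
  proof -
    let ?g = "\<lambda>(i,j). (cmod (rest N' B i j))\<^sup>2"
    let ?h = "\<lambda>(i,j). (cmod (trunc N' B i j))\<^sup>2"
    have hsr: "hilbert_schmidt (rest N' B)" and hst: "hilbert_schmidt (trunc N' B)"
      using hs_rest[OF B] hs_trunc[OF B] by auto
    have split: "?f x = ?g x + ?h x" for x by (cases x) (auto simp: rest_def trunc_def)
    have "hsn B = infsum (\<lambda>x. ?g x + ?h x) UNIV" unfolding hsn_def using split by presburger
    also have "\<dots> = hsn (rest N' B) + hsn (trunc N' B)"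
      unfolding hsn_def
      by (rule infsum_add) (use hsr hst in \<open>auto simp: hilbert_schmidt_def\<close>)
    finally have e: "hsn (rest N' B) = hsn B - hsn (trunc N' B)" by simp
    have Fsub: "x \<in> F \<Longrightarrow> fst x < N' \<and> snd x < N'" for x using N NN by force
    have "sum ?f F = sum ?h F"
      by (rule sum.cong) (auto dest!: Fsub simp: trunc_def)
    also have "\<dots> \<le> hsn (trunc N' B)" unfolding hsn_def
      by (rule finite_sum_le_infsum) (use hst F(1) in \<open>auto simp: hilbert_schmidt_def\<close>)
    finally have "sum ?f F \<le> hsn (trunc N' B)" .
    moreover have "hsn B - sum ?f F \<le> \<delta>" using F(2) by (simp add: dist_real_def)
    ultimately show ?thesis using e by linarith
  qed
  then show ?thesis by blast
qed

lemma mm_add_left: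
  assumes "hilbert_schmidt B1" "hilbert_schmidt B2" "hilbert_schmidt C"
  shows "mat_mult (\<lambda>i j. B1 i j + B2 i j) C = mat_add (mat_scale 1 (mat_mult B1 C)) (mat_scale 1 (mat_mult B2 C))"
proof (intro ext)
  fix i j
  show "mat_mult (\<lambda>i j. B1 i j + B2 i j) C i j = mat_add (mat_scale 1 (mat_mult B1 C)) (mat_scale 1 (mat_mult B2 C)) i j"
    unfolding mat_mult_def mat_add_def mat_scale_def
    using infsum_add[OF mm_summable[OF assms(1,3)] mm_summable[OF assms(2,3)]]
    by (simp add: distrib_right)
qed

lemma mm_add_right:
  assumes "hilbert_schmidt B" "hilbert_schmidt C1" "hilbert_schmidt C2"
  shows "mat_mult B (\<lambda>i j. C1 i j + C2 i j) = mat_add (mat_scale 1 (mat_mult B C1)) (mat_scale 1 (mat_mult B C2))"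
proof (intro ext)
  fix i j
  show "mat_mult B (\<lambda>i j. C1 i j + C2 i j) i j = mat_add (mat_scale 1 (mat_mult B C1)) (mat_scale 1 (mat_mult B C2)) i j"
    unfolding mat_mult_def mat_add_def mat_scale_def
    using infsum_add[OF mm_summable[OF assms(1,2)] mm_summable[OF assms(1,3)]]
    by (simp add: distrib_left)
qed

lemma lin_add: "lin_fun L \<Longrightarrow> trace_class A \<Longrightarrow> trace_class B \<Longrightarrow> L (mat_add (mat_scale 1 A) (mat_scale 1 B)) = L A + L B"
  unfolding lin_fun_def by simp

lemma tc_mm: "hilbert_schmidt B \<Longrightarrow> hilbert_schmidt C \<Longrightarrow> trace_class (mat_mult B C)"
  unfolding trace_class_def by blast

lemma approx_zero:
  assumes L: "lin_fun D" and units: "\<And>p q. D (munit p q) = 0"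
    and bd: "\<And>B C t. hilbert_schmidt B \<Longrightarrow> hilbert_schmidt C \<Longrightarrow> t > 0 \<Longrightarrow>
                cmod (D (mat_mult B C)) \<le> t\<^sup>2 * hsn B + hsn C / t\<^sup>2"
    and X: "trace_class X"
  shows "D X = 0"
proof -
  obtain B C where B: "hilbert_schmidt B" and C: "hilbert_schmidt C" and XBC: "X = mat_mult B C"
    using X unfolding trace_class_def by blast
  have "cmod (D X) \<le> 0 + \<epsilon>" if e: "\<epsilon> > 0" for \<epsilon>
  proof -
    define t where "t = sqrt (4 * (hsn C + 1) / \<epsilon>)"
    have tpos: "t > 0" unfolding t_def using e hsn_nonneg[of C] by simp
    have t2: "t\<^sup>2 = 4 * (hsn C + 1) / \<epsilon>" unfolding t_def using e hsn_nonneg[of C] by simp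
    have tC: "hsn C / t\<^sup>2 \<le> \<epsilon> / 4"
    proof -
      have nz: "4 * (hsn C + 1) \<noteq> 0" using hsn_nonneg[of C] by simp
      have "hsn C / t\<^sup>2 = hsn C / (4 * (hsn C + 1) / \<epsilon>)" by (simp add: t2)
      also have "\<dots> = \<epsilon> * hsn C / (4 * (hsn C + 1))" using nz e by (simp add: field_simps)
      also have "\<dots> \<le> \<epsilon> * (hsn C + 1) / (4 * (hsn C + 1))"
        using e hsn_nonneg[of C] by (intro divide_right_mono mult_left_mono) auto
      also have "\<dots> = \<epsilon> / 4" using hsn_nonneg[of C] by (simp add: field_simps)
      finally show ?thesis .
    qed
    define u where "u = sqrt (\<epsilon> / (4 * (hsn B + 1)))"
    have upos: "u > 0" unfolding u_def using e hsn_nonneg[of B] by simp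
    have u2: "u\<^sup>2 = \<epsilon> / (4 * (hsn B + 1))" unfolding u_def using e hsn_nonneg[of B] by simp
    have uB: "u\<^sup>2 * hsn B \<le> \<epsilon> / 4"
    proof -
      have "u\<^sup>2 * hsn B = \<epsilon> * hsn B / (4 * (hsn B + 1))" using u2 by simp
      also have "\<dots> \<le> \<epsilon> * (hsn B + 1) / (4 * (hsn B + 1))"
        using e hsn_nonneg[of B] by (intro divide_right_mono mult_left_mono) auto
      also have "\<dots> = \<epsilon> / 4" using hsn_nonneg[of B] by (simp add: field_simps)
      finally show ?thesis .
    qed
    obtain N1 where N1: "\<And>N'. N' \<ge> N1 \<Longrightarrow> hsn (rest N' B) \<le> \<epsilon> / (4 * t\<^sup>2)"
      using tail[OF B, of "\<epsilon> / (4 * t\<^sup>2)"] e tpos by auto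
    obtain N2 where N2: "\<And>N'. N' \<ge> N2 \<Longrightarrow> hsn (rest N' C) \<le> \<epsilon> * u\<^sup>2 / 4"
      using tail[OF C, of "\<epsilon> * u\<^sup>2 / 4"] e upos by auto
    define N where "N = max N1 N2"
    let ?B1 = "trunc N B" and ?B2 = "rest N B" and ?C1 = "trunc N C" and ?C2 = "rest N C"
    have hB1: "hilbert_schmidt ?B1" "hsn ?B1 \<le> hsn B" using hs_trunc[OF B] by auto
    have hB2: "hilbert_schmidt ?B2" using hs_rest[OF B] by auto
    have hC1: "hilbert_schmidt ?C1" using hs_trunc[OF C] by auto
    have hC2: "hilbert_schmidt ?C2" using hs_rest[OF C] by auto
    have sB2: "hsn ?B2 \<le> \<epsilon> / (4 * t\<^sup>2)" using N1[of N] by (simp add: N_def)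
    have sC2: "hsn ?C2 \<le> \<epsilon> * u\<^sup>2 / 4" using N2[of N] by (simp add: N_def)
    have Bs: "B = (\<lambda>i j. ?B2 i j + ?B1 i j)" by (intro ext) (auto simp: rest_def trunc_def)
    have Cs: "C = (\<lambda>i j. ?C1 i j + ?C2 i j)" by (intro ext) (auto simp: rest_def trunc_def)
    have e1: "D X = D (mat_mult ?B2 C) + D (mat_mult ?B1 C)"
      unfolding XBC by (subst Bs, subst mm_add_left[OF hB2 hB1(1) C], rule lin_add[OF L tc_mm tc_mm])
        (use hB2 hB1 C in auto)
    have e2: "D (mat_mult ?B1 C) = D (mat_mult ?B1 ?C1) + D (mat_mult ?B1 ?C2)"
      by (subst Cs, subst mm_add_right[OF hB1(1) hC1 hC2], rule lin_add[OF L tc_mm tc_mm])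
        (use hB1 hC1 hC2 in auto)
    have e3: "D (mat_mult ?B1 ?C1) = 0"
    proof (rule lin_fs_zero[OF L units, of "{..<N} \<times> {..<N}"])
      fix i j assume nz: "mat_mult ?B1 ?C1 i j \<noteq> 0"
      have "i < N"
      proof (rule ccontr)
        assume "\<not> i < N"
        then have "mat_mult ?B1 ?C1 i j = 0" unfolding mat_mult_def by (simp add: trunc_def)
        then show False using nz by simp
      qed
      moreover have "j < N"
      proof (rule ccontr)
        assume "\<not> j < N"
        then have "mat_mult ?B1 ?C1 i j = 0" unfolding mat_mult_def by (simp add: trunc_def)
        then show False using nz by simp
      qed
      ultimately show "(i,j) \<in> {..<N} \<times> {..<N}" by simp
    qed simp
    have b1: "cmod (D (mat_mult ?B2 C)) \<le> \<epsilon> / 2"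
    proof -
      have "cmod (D (mat_mult ?B2 C)) \<le> t\<^sup>2 * hsn ?B2 + hsn C / t\<^sup>2" by (rule bd[OF hB2 C tpos])
      also have "t\<^sup>2 * hsn ?B2 \<le> t\<^sup>2 * (\<epsilon> / (4 * t\<^sup>2))" using sB2 by (intro mult_left_mono) auto
      also have "t\<^sup>2 * (\<epsilon> / (4 * t\<^sup>2)) = \<epsilon> / 4" using tpos by (simp add: field_simps)
      finally show ?thesis using tC by linarith
    qed
    have b2: "cmod (D (mat_mult ?B1 ?C2)) \<le> \<epsilon> / 2"
    proof -
      have "cmod (D (mat_mult ?B1 ?C2)) \<le> u\<^sup>2 * hsn ?B1 + hsn ?C2 / u\<^sup>2" by (rule bd[OF hB1(1) hC2 upos])
      also have "u\<^sup>2 * hsn ?B1 \<le> u\<^sup>2 * hsn B" using hB1(2) by (intro mult_left_mono) auto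
      also have "hsn ?C2 / u\<^sup>2 \<le> (\<epsilon> * u\<^sup>2 / 4) / u\<^sup>2" using sC2 upos by (intro divide_right_mono) auto
      also have "(\<epsilon> * u\<^sup>2 / 4) / u\<^sup>2 = \<epsilon> / 4" using upos by (simp add: field_simps)
      finally show ?thesis using uB by linarith
    qed
    have "cmod (D X) \<le> cmod (D (mat_mult ?B2 C)) + cmod (D (mat_mult ?B1 ?C2))"
      unfolding e1 e2 e3 by (simp add: norm_triangle_ineq)
    then show ?thesis using b1 b2 by simp
  qed
  then have "cmod (D X) \<le> 0" by (rule field_le_epsilon)
  then show ?thesis by simp
qed

context U1op begin

lemma E_unit_zero:
  assumes ne: "int m - int n \<noteq> int p - int q"
  shows "E (munit p q) m n = 0"
proof -
  define d where "d = (int m - int n) - (int p - int q)"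
  have d0: "d \<noteq> 0" using ne by (simp add: d_def)
  define \<phi> where "\<phi> = pi / real_of_int \<bar>d\<bar>"
  have dge: "real_of_int \<bar>d\<bar> \<ge> 1" using d0 by linarith
  have phi0: "0 \<le> \<phi>" unfolding \<phi>_def by simp
  have phi2: "\<phi> < 2 * pi"
  proof -
    have "\<phi> \<le> pi" unfolding \<phi>_def using dge pi_gt_zero by (simp add: divide_le_eq)
    then show ?thesis using pi_gt_zero by linarith
  qed
  define e1 where "e1 = exp (\<i> * complex_of_real (\<phi> * (real p - real q)))"
  have conj: "U1_conj \<phi> (munit p q) = mat_scale e1 (munit p q)"
  proof (intro ext)
    fix i j show "U1_conj \<phi> (munit p q) i j = mat_scale e1 (munit p q) i j"
      by (cases "i = p \<and> j = q") (auto simp: U1_conj_def mat_scale_def munit_def e1_def)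
  qed
  have "E (U1_conj \<phi> (munit p q)) = U1_conj \<phi> (E (munit p q))"
    using invE phi0 phi2 unit_tc unfolding U1_invariant_def by blast
  then have "mat_scale e1 (E (munit p q)) = U1_conj \<phi> (E (munit p q))"
    unfolding conj E_scale[OF unit_tc] .
  then have eq: "e1 * E (munit p q) m n = exp (\<i> * complex_of_real (\<phi> * (real m - real n))) * E (munit p q) m n"
    unfolding mat_scale_def U1_conj_def by meson
  have re: "\<phi> * (real m - real n) = \<phi> * (real p - real q) + \<phi> * real_of_int d"
    by (simp add: d_def algebra_simps)
  have disj: "\<phi> * real_of_int d = pi \<or> \<phi> * real_of_int d = - pi"
    unfolding \<phi>_def using d0 by (cases "d > 0") auto
  have mpi: "exp (\<i> * complex_of_real (-pi)) = -1"
    using exp_pi_i' by (simp add: exp_minus)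
  have r: "exp (\<i> * complex_of_real (\<phi> * real_of_int d)) = -1"
  proof (cases "\<phi> * real_of_int d = pi")
    case True then show ?thesis by (simp only: True exp_pi_i')
  next
    case False then have h: "\<phi> * real_of_int d = - pi" using disj by simp
    show ?thesis by (simp only: h mpi)
  qed
  have "exp (\<i> * complex_of_real (\<phi> * (real m - real n))) = e1 * exp (\<i> * complex_of_real (\<phi> * real_of_int d))"
    unfolding e1_def re by (simp only: of_real_add distrib_left exp_add)
  then have "exp (\<i> * complex_of_real (\<phi> * (real m - real n))) = - e1" using r by simp
  then have "e1 * E (munit p q) m n = - e1 * E (munit p q) m n" using eq by simp
  moreover have "e1 \<noteq> 0" unfolding e1_def by simp
  ultimately show ?thesis by simp
qed

end



definition psd :: "mat \<Rightarrow> bool" where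
  "psd M \<longleftrightarrow> (\<forall>F v. finite F \<longrightarrow> 0 \<le> (\<Sum>i\<in>F. \<Sum>j\<in>F. cnj (v i) * M i j * v j))"

definition qf :: "mat \<Rightarrow> nat set \<Rightarrow> (nat \<Rightarrow> complex) \<Rightarrow> (nat \<Rightarrow> complex) \<Rightarrow> complex" where
  "qf M G x y = (\<Sum>i\<in>G. \<Sum>j\<in>G. cnj (x i) * M i j * y j)"

lemma psd_qf: "psd M \<Longrightarrow> finite G \<Longrightarrow> 0 \<le> qf M G v v"
  unfolding psd_def qf_def by blast

lemma qf_add: "qf M G (\<lambda>i. x i + y i) (\<lambda>i. x i + y i) = qf M G x x + qf M G x y + qf M G y x + qf M G y y"
  unfolding qf_def by (simp add: algebra_simps sum.distrib)

lemma psd_diag: "psd M \<Longrightarrow> 0 \<le> M p p"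
  using psd_qf[of M "{p}" "\<lambda>_. 1"] by (simp add: qf_def)

lemma form2:
  assumes "psd M" "p \<noteq> q"
  shows "0 \<le> cnj x * M p p * x + cnj x * M p q * y + cnj y * M q p * x + cnj y * M q q * y"
proof -
  have "0 \<le> qf M {p,q} (\<lambda>i. if i = p then x else y) (\<lambda>i. if i = p then x else y)"
    by (rule psd_qf[OF assms(1)]) simp
  also have "\<dots> = cnj x * M p p * x + cnj x * M p q * y + cnj y * M q p * x + cnj y * M q q * y"
    using assms(2) by (simp add: qf_def)
  finally show ?thesis .
qed

lemma psd2_herm:
  fixes a b c d :: complex
  assumes H: "\<And>x y. 0 \<le> cnj x * a * x + cnj x * b * y + cnj y * c * x + cnj y * d * y"
  shows "c = cnj b"
proof -
  have h10: "0 \<le> a" using H[of 1 0] by simp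
  have h01: "0 \<le> d" using H[of 0 1] by simp
  have h11: "0 \<le> a + b + c + d" using H[of 1 1] by simp
  have h1i: "0 \<le> a + \<i> * b - \<i> * c + d" using H[of 1 \<i>] by (simp add: algebra_simps)
  have ia: "Im a = 0" using h10 by (auto simp: less_eq_complex_def)
  have id: "Im d = 0" using h01 by (auto simp: less_eq_complex_def)
  have "Im (b + c) = 0" using h11 ia id by (auto simp: less_eq_complex_def)
  moreover have "Re b - Re c = 0" using h1i ia id by (auto simp: less_eq_complex_def)
  ultimately show "c = cnj b" by (simp add: complex_eq_iff)
qed

lemma psd_herm: assumes "psd M" shows "M q p = cnj (M p q)"
proof (cases "p = q")
  case True
  then show ?thesis using psd_diag[OF assms, of p] by (simp add: complex_eq_iff less_eq_complex_def)
next
  case False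
  show ?thesis by (rule psd2_herm[OF form2[OF assms False]])
qed

lemma psd_zero: assumes "psd M" "M a a = 0" shows "M p a = 0"
proof (cases "p = a")
  case True then show ?thesis using assms by simp
next
  case False
  have "(cmod (M p a))\<^sup>2 \<le> Re (M p p) * Re (M a a)" by (rule psd2(1)[OF form2[OF assms(1) False]])
  then show ?thesis using assms(2) by simp
qed

lemma psd_schur:
  assumes M: "psd M" and d: "0 < Re (M a a)"
  shows "psd (\<lambda>p q. M p q - M p a * cnj (M q a) / of_real (Re (M a a)))"
  unfolding psd_def
proof (intro allI impI)
  fix F :: "nat set" and v :: "nat \<Rightarrow> complex" assume F: "finite F"
  define dd where "dd = Re (M a a)"
  have Maa: "M a a = of_real dd" using psd_diag[OF M, of a] by (simp add: dd_def complex_eq_iff less_eq_complex_def)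
  define w where "w = (\<Sum>i\<in>F. cnj (v i) * M i a)"
  define t where "t = - cnj w / of_real dd"
  define G where "G = insert a F"
  have G: "finite G" "F \<subseteq> G" "a \<in> G" using F by (auto simp: G_def)
  define x where "x i = (if i \<in> F then v i else 0)" for i
  define y where "y i = (if i = a then t else 0)" for i
  have q1: "qf M G x x = (\<Sum>i\<in>F. \<Sum>j\<in>F. cnj (v i) * M i j * v j)"
  proof -
    have "qf M G x x = (\<Sum>i\<in>F. \<Sum>j\<in>G. cnj (x i) * M i j * x j)"
      unfolding qf_def by (rule sum.mono_neutral_right) (use G in \<open>auto simp: x_def\<close>)
    also have "\<dots> = (\<Sum>i\<in>F. \<Sum>j\<in>F. cnj (x i) * M i j * x j)"
      by (rule sum.cong[OF refl], rule sum.mono_neutral_right) (use G in \<open>auto simp: x_def\<close>)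
    also have "\<dots> = (\<Sum>i\<in>F. \<Sum>j\<in>F. cnj (v i) * M i j * v j)" by (simp add: x_def)
    finally show ?thesis .
  qed
  have q2: "qf M G x y = t * w"
  proof -
    have "qf M G x y = (\<Sum>i\<in>G. cnj (x i) * M i a * t)"
      unfolding qf_def y_def using G by (simp add: if_distrib[of "\<lambda>z. _ * z"] sum.delta' cong: if_cong)
    also have "\<dots> = (\<Sum>i\<in>F. cnj (x i) * M i a * t)"
      by (rule sum.mono_neutral_right) (use G in \<open>auto simp: x_def\<close>)
    also have "\<dots> = (\<Sum>i\<in>F. cnj (v i) * M i a * t)" by (simp add: x_def)
    also have "\<dots> = t * w" by (simp add: w_def sum_distrib_left mult_ac)
    finally show ?thesis .
  qed
  have q3: "qf M G y x = cnj t * cnj w"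
  proof -
    have "qf M G y x = (\<Sum>i\<in>G. if i = a then (\<Sum>j\<in>G. cnj t * M i j * x j) else 0)"
      unfolding qf_def y_def by (rule sum.cong) auto
    also have "\<dots> = (\<Sum>j\<in>G. cnj t * M a j * x j)" using G by (simp add: sum.delta)
    also have "\<dots> = (\<Sum>j\<in>F. cnj t * M a j * x j)"
      by (rule sum.mono_neutral_right) (use G in \<open>auto simp: x_def\<close>)
    also have "\<dots> = (\<Sum>j\<in>F. cnj t * M a j * v j)" by (simp add: x_def)
    also have "\<dots> = (\<Sum>j\<in>F. cnj t * (cnj (M j a) * v j))"
      by (rule sum.cong[OF refl]) (simp add: psd_herm[OF M, of _ a] mult_ac)
    also have "\<dots> = cnj t * cnj w" by (simp add: w_def cnj_sum sum_distrib_left mult_ac)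
    finally show ?thesis .
  qed
  have q4: "qf M G y y = cnj t * M a a * t"
  proof -
    have "qf M G y y = (\<Sum>i\<in>G. if i = a then (\<Sum>j\<in>G. cnj t * M i j * y j) else 0)"
      unfolding qf_def y_def by (rule sum.cong) auto
    also have "\<dots> = (\<Sum>j\<in>G. cnj t * M a j * y j)" using G by (simp add: sum.delta)
    also have "\<dots> = cnj t * M a a * t"
      unfolding y_def using G by (simp add: if_distrib[of "\<lambda>z. _ * z"] sum.delta' cong: if_cong)
    finally show ?thesis .
  qed
  have "0 \<le> qf M G (\<lambda>i. x i + y i) (\<lambda>i. x i + y i)" by (rule psd_qf[OF M G(1)])
  also have "\<dots> = (\<Sum>i\<in>F. \<Sum>j\<in>F. cnj (v i) * M i j * v j) + t * w + cnj t * cnj w + cnj t * M a a * t"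
    unfolding qf_add q1 q2 q3 q4 ..
  also have "\<dots> = (\<Sum>i\<in>F. \<Sum>j\<in>F. cnj (v i) * M i j * v j) - w * cnj w / of_real dd"
    using d unfolding t_def Maa dd_def[symmetric] by (simp add: field_simps)
  also have "\<dots> = (\<Sum>i\<in>F. \<Sum>j\<in>F. cnj (v i) * (M i j - M i a * cnj (M j a) / of_real (Re (M a a))) * v j)"
  proof -
    have "(\<Sum>i\<in>F. \<Sum>j\<in>F. cnj (v i) * (M i a * cnj (M j a) / of_real dd) * v j) = w * cnj w / of_real dd"
      by (simp add: w_def cnj_sum sum_distrib_left sum_distrib_right sum_divide_distrib mult_ac)
    then show ?thesis by (simp add: algebra_simps sum_subtractf dd_def)
  qed
  finally show "0 \<le> (\<Sum>i\<in>F. \<Sum>j\<in>F. cnj (v i) * (M i j - M i a * cnj (M j a) / of_real (Re (M a a))) * v j)" .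
qed


fun chR :: "mat \<Rightarrow> nat \<Rightarrow> mat" where
  "chR M 0 = M"
| "chR M (Suc a) = (if 0 < Re (chR M a a a)
      then (\<lambda>p q. chR M a p q - chR M a p a * cnj (chR M a q a) / of_real (Re (chR M a a a)))
      else chR M a)"

definition chc :: "mat \<Rightarrow> nat \<Rightarrow> nat \<Rightarrow> complex" where
  "chc M a p = (if 0 < Re (chR M a a a) then chR M a p a / of_real (sqrt (Re (chR M a a a))) else 0)"

lemma chR_psd: "psd M \<Longrightarrow> psd (chR M a)"
  by (induction a) (auto intro: psd_schur)

lemma chR_step: "chR M (Suc a) p q = chR M a p q - chc M a p * cnj (chc M a q)"
proof (cases "0 < Re (chR M a a a)")
  case True
  define d where "d = Re (chR M a a a)"
  have s: "complex_of_real (sqrt d) * complex_of_real (sqrt d) = complex_of_real d"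
    using True by (simp add: d_def flip: of_real_mult)
  have "chc M a p * cnj (chc M a q) = chR M a p a * cnj (chR M a q a) / (of_real (sqrt d) * of_real (sqrt d))"
    using True by (simp add: chc_def d_def)
  then have "chc M a p * cnj (chc M a q) = chR M a p a * cnj (chR M a q a) / of_real d"
    unfolding s .
  then show ?thesis using True by (simp add: d_def)
qed (simp add: chc_def)

lemma chR_sum: "M p q = (\<Sum>\<alpha><s. chc M \<alpha> p * cnj (chc M \<alpha> q)) + chR M s p q"
  by (induction s) (simp_all add: chR_step del: chR.simps(2))

lemma chR_col_zero:
  assumes M: "psd M"
  shows "chR M (Suc a) p a = 0"
proof -
  let ?r = "chR M a"
  have P: "psd ?r" by (rule chR_psd[OF M])
  show ?thesis
  proof (cases "0 < Re (?r a a)")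
    case True
    then show ?thesis using psd_diag[OF P, of a] by (simp add: complex_eq_iff less_eq_complex_def)
  next
    case False
    then have "?r a a = 0" using psd_diag[OF P, of a] by (simp add: complex_eq_iff less_eq_complex_def)
    then have "?r p a = 0" by (rule psd_zero[OF P])
    then show ?thesis using False by simp
  qed
qed

lemma chR_zero:
  assumes M: "psd M"
  shows "p < a \<or> q < a \<Longrightarrow> chR M a p q = 0"
proof (induction a arbitrary: p q)
  case 0 then show ?case by simp
next
  case (Suc a)
  let ?r = "chR M a"
  have P: "psd (chR M (Suc a))" by (rule chR_psd[OF M])
  have c0: "chc M a x = 0" if "x < a" for x
    unfolding chc_def using Suc.IH[of x a] that by simp
  show ?case
  proof (cases "p < a \<or> q < a")
    case True
    then have "?r p q = 0" by (rule Suc.IH)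
    moreover have "chc M a p * cnj (chc M a q) = 0" using True c0 by auto
    ultimately show ?thesis by (simp add: chR_step del: chR.simps(2))
  next
    case False
    then have "p = a \<or> q = a" using Suc.prems by auto
    then show ?thesis
    proof
      assume "q = a" then show ?thesis using chR_col_zero[OF M] by simp
    next
      assume "p = a"
      then show ?thesis using psd_herm[OF P, of q p] chR_col_zero[OF M, of a q] by simp
    qed
  qed
qed

lemma chc_zero: assumes M: "psd M" and "p < a" shows "chc M a p = 0"
  unfolding chc_def using chR_zero[OF M, of p a a] assms(2) by simp

lemma chol:
  assumes M: "psd M"
  shows "((\<lambda>\<alpha>. chc M \<alpha> p * cnj (chc M \<alpha> q)) has_sum M p q) UNIV"
proof (rule has_sum_finite_neutralI[of "{..<Suc (max p q)}"])
  have z: "chR M (Suc (max p q)) p q = 0" by (rule chR_zero[OF M]) (simp add: less_Suc_eq_le)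
  show "M p q = (\<Sum>\<alpha><Suc (max p q). chc M \<alpha> p * cnj (chc M \<alpha> q))"
    using chR_sum[of M p q "Suc (max p q)"] unfolding z by simp
  fix \<alpha> assume "\<alpha> \<in> UNIV - {..<Suc (max p q)}"
  then have "p < \<alpha>" by auto
  then show "chc M \<alpha> p * cnj (chc M \<alpha> q) = 0" using chc_zero[OF M] by simp
qed auto




definition Mk :: "(mat \<Rightarrow> mat) \<Rightarrow> int \<Rightarrow> mat" where
  "Mk E k = (\<lambda>p q. if 0 \<le> int p + k \<and> 0 \<le> int q + k then E (munit p q) (nat (int p + k)) (nat (int q + k)) else 0)"

definition cc :: "(mat \<Rightarrow> mat) \<Rightarrow> int \<times> nat \<Rightarrow> nat \<Rightarrow> complex" where
  "cc E = (\<lambda>(k, \<alpha>) n. chc (Mk E k) \<alpha> n)"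

lemma adj_unit: "mat_adj (munit p q) = munit q p"
  by (intro ext) (auto simp: mat_adj_def munit_def)

lemma unit_mult2: "mat_mult (munit i r) (munit r j) = munit i j"
proof (intro ext)
  fix a b show "mat_mult (munit i r) (munit r j) a b = munit i j a b"
    unfolding mat_mult_def by (subst infsum_single_pt[where a=r]) (auto simp: munit_def)
qed

lemma units_block: "positive_block N (\<lambda>i j. munit i j)"
  using gram_block_pos[of "\<lambda>i. munit 0 i" N] unit_hs by (simp add: adj_unit unit_mult2)

lemma unit_pos: "positive_op (munit n n)"
  using pos_op_of_block1[OF gram_block_pos[of "\<lambda>_. munit 0 n" 1]] unit_hs by (simp add: adj_unit unit_mult2)

lemma unit_trace: "mat_trace (munit n n) = 1"
  unfolding mat_trace_def by (subst infsum_single_pt[where a=n]) (auto simp: munit_def)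

lemma shift_diag: "mat_mult (shift_op k) (diag_op c) = (\<lambda>i j. if int i = int j + k then c j else 0)"
proof (intro ext)
  fix i j show "mat_mult (shift_op k) (diag_op c) i j = (if int i = int j + k then c j else 0)"
    unfolding mat_mult_def by (subst infsum_single_pt[where a=j]) (auto simp: shift_op_def diag_op_def)
qed

lemma kraus_explicit:
  "kraus_term (mat_mult (shift_op k) (diag_op c)) X m n =
    (if k \<le> int m \<and> k \<le> int n then c (nat (int m - k)) * X (nat (int m - k)) (nat (int n - k)) * cnj (c (nat (int n - k))) else 0)"
proof -
  define K where "K = (\<lambda>i j. if int i = int j + k then c j else (0::complex))"
  have KX: "mat_mult K X m j = (if k \<le> int m then c (nat (int m - k)) * X (nat (int m - k)) j else 0)" for j
    unfolding mat_mult_def K_def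
    by (subst infsum_single_pt[where a="nat (int m - k)"]) auto
  show ?thesis
    unfolding kraus_term_def shift_diag K_def[symmetric]
    unfolding mat_mult_def[of "mat_mult K X"] mat_adj_def KX
    by (subst infsum_single_pt[where a="nat (int n - k)"]) (auto simp: K_def)
qed

context U1op begin

lemma Mk_psd: "psd (Mk E k)"
  unfolding psd_def
proof (intro allI impI)
  fix F :: "nat set" and v :: "nat \<Rightarrow> complex" assume F: "finite F"
  obtain N where N: "F \<subseteq> {..<N}" using finite_nat_bounded[OF F] by blast
  define F0 where "F0 = {p \<in> F. 0 \<le> int p + k}"
  define v0 where "v0 i = (if i \<in> F0 then v i else 0)" for i
  define G where "G = (\<lambda>p. nat (int p + k)) ` F0"
  define w where "w i b = (if b = nat (int i + k) then v0 i else 0)" for i b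
  have finG: "finite G" unfolding G_def F0_def using F by simp
  have PB: "positive_block N (\<lambda>i j. E (munit i j))"
    by (rule cpE[OF unit_tc units_block])
  from PB[unfolded positive_block_def Let_def, rule_format, OF finG, of w]
  have nn: "0 \<le> (\<Sum>i<N. \<Sum>j<N. \<Sum>p\<in>G. \<Sum>q\<in>G. cnj (w i p) * E (munit i j) p q * w j q)"
    by (simp add: complex_nonneg_iff)
  have inner: "(\<Sum>p\<in>G. \<Sum>q\<in>G. cnj (w i p) * E (munit i j) p q * w j q)
      = cnj (v0 i) * E (munit i j) (nat (int i + k)) (nat (int j + k)) * v0 j" for i j
  proof (cases "i \<in> F0 \<and> j \<in> F0")
    case True
    then have "nat (int i + k) \<in> G" "nat (int j + k) \<in> G" unfolding G_def by auto
    then show ?thesis unfolding w_def by (rule quad_delta[OF finG])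
  next
    case False
    then have "v0 i = 0 \<or> v0 j = 0" by (auto simp: v0_def)
    then show ?thesis
    proof
      assume h: "v0 i = 0"
      then have "w i p = 0" for p by (simp add: w_def)
      then show ?thesis using h by simp
    next
      assume h: "v0 j = 0"
      then have "w j p = 0" for p by (simp add: w_def)
      then show ?thesis using h by simp
    qed
  qed
  have "(\<Sum>i<N. \<Sum>j<N. \<Sum>p\<in>G. \<Sum>q\<in>G. cnj (w i p) * E (munit i j) p q * w j q)
     = (\<Sum>i<N. \<Sum>j<N. cnj (v0 i) * E (munit i j) (nat (int i + k)) (nat (int j + k)) * v0 j)"
    unfolding inner ..
  also have "\<dots> = (\<Sum>i\<in>F. \<Sum>j<N. cnj (v0 i) * E (munit i j) (nat (int i + k)) (nat (int j + k)) * v0 j)"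
    by (rule sum.mono_neutral_right) (use N F in \<open>auto simp: v0_def F0_def\<close>)
  also have "\<dots> = (\<Sum>i\<in>F. \<Sum>j\<in>F. cnj (v0 i) * E (munit i j) (nat (int i + k)) (nat (int j + k)) * v0 j)"
    by (rule sum.cong[OF refl], rule sum.mono_neutral_right) (use N F in \<open>auto simp: v0_def F0_def\<close>)
  also have "\<dots> = (\<Sum>i\<in>F. \<Sum>j\<in>F. cnj (v i) * Mk E k i j * v j)"
    by (intro sum.cong refl) (auto simp: v0_def F0_def Mk_def)
  finally show "0 \<le> (\<Sum>i\<in>F. \<Sum>j\<in>F. cnj (v i) * Mk E k i j * v j)" using nn by simp
qed


lemma Mk_diag_le: "Re (Mk E k p p) \<le> 1"
proof (cases "0 \<le> int p + k")
  case True
  have "cmod (E (mat_mult (munit p p) (munit p p)) (nat (int p + k)) (nat (int p + k))) \<le> (1\<^sup>2 * hsn (munit p p) + hsn (munit p p) / 1\<^sup>2) / 2"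
    by (rule phi_bound[OF unit_hs unit_hs]) simp
  then have "cmod (E (munit p p) (nat (int p + k)) (nat (int p + k))) \<le> 1"
    by (simp add: unit_mult unit_hsn)
  then show ?thesis using True complex_Re_le_cmod[of "E (munit p p) (nat (int p + k)) (nat (int p + k))"]
    by (simp add: Mk_def)
qed (simp add: Mk_def)

lemma csq_has_sum: "((\<lambda>\<alpha>. (cmod (chc (Mk E k) \<alpha> p))\<^sup>2) has_sum Re (Mk E k p p)) UNIV"
proof -
  have "((\<lambda>\<alpha>. Re (chc (Mk E k) \<alpha> p * cnj (chc (Mk E k) \<alpha> p))) has_sum Re (Mk E k p p)) UNIV"
    by (rule has_sum_Re[OF chol[OF Mk_psd]])
  moreover have "Re (z * cnj z) = (cmod z)\<^sup>2" for z :: complex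
    using cmod_power2[of z] by (simp add: power2_eq_square)
  ultimately show ?thesis by simp
qed

lemma csq_sum_le: assumes A: "finite A" shows "(\<Sum>\<alpha>\<in>A. (cmod (chc (Mk E k) \<alpha> p))\<^sup>2) \<le> 1"
proof -
  have "(\<Sum>\<alpha>\<in>A. (cmod (chc (Mk E k) \<alpha> p))\<^sup>2) \<le> Re (Mk E k p p)"
    by (rule finite_sum_le_has_sum[OF csq_has_sum A]) auto
  then show ?thesis using Mk_diag_le[of k p] by linarith
qed

end

definition kt :: "(mat \<Rightarrow> mat) \<Rightarrow> mat \<Rightarrow> nat \<Rightarrow> nat \<Rightarrow> int \<times> nat \<Rightarrow> complex" where
  "kt E X m n = (\<lambda>(k, \<alpha>). kraus_term (mat_mult (shift_op k) (diag_op (cc E (k, \<alpha>)))) X m n)"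

lemma kt_explicit: "kt E X m n (k, \<alpha>) =
   (if k \<le> int m \<and> k \<le> int n then chc (Mk E k) \<alpha> (nat (int m - k)) * X (nat (int m - k)) (nat (int n - k))
      * cnj (chc (Mk E k) \<alpha> (nat (int n - k))) else 0)"
  unfolding kt_def by (simp add: kraus_explicit cc_def)

definition psi :: "(mat \<Rightarrow> mat) \<Rightarrow> mat \<Rightarrow> nat \<Rightarrow> nat \<Rightarrow> complex" where
  "psi E X m n = infsum (kt E X m n) UNIV"

lemma inj_pk: "inj_on (\<lambda>k. nat (int m - k)) {k. k \<le> int m}"
  by (rule inj_onI) auto

lemma sum_rown_img:
  assumes B: "hilbert_schmidt B" and K: "finite K" and Ksub: "K \<subseteq> {k. k \<le> int m}"
  shows "(\<Sum>k\<in>K. rown B (nat (int m - k))) \<le> hsn B"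
proof -
  have inj: "inj_on (\<lambda>k. nat (int m - k)) K" using inj_on_subset[OF inj_pk Ksub] .
  have "(\<Sum>k\<in>K. rown B (nat (int m - k))) = sum (rown B) ((\<lambda>k. nat (int m - k)) ` K)"
    by (simp add: sum.reindex[OF inj])
  also have "\<dots> \<le> hsn B" by (rule sum_rown_le[OF B]) (use K in simp)
  finally show ?thesis .
qed

lemma sum_coln_img:
  assumes B: "hilbert_schmidt B" and K: "finite K" and Ksub: "K \<subseteq> {k. k \<le> int m}"
  shows "(\<Sum>k\<in>K. coln B (nat (int m - k))) \<le> hsn B"
proof -
  have inj: "inj_on (\<lambda>k. nat (int m - k)) K" using inj_on_subset[OF inj_pk Ksub] .
  have "(\<Sum>k\<in>K. coln B (nat (int m - k))) = sum (coln B) ((\<lambda>k. nat (int m - k)) ` K)"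
    by (simp add: sum.reindex[OF inj])
  also have "\<dots> \<le> hsn B" by (rule sum_coln_le[OF B]) (use K in simp)
  finally show ?thesis .
qed

lemma sum_half: "(\<Sum>\<alpha>\<in>A. x * ((a \<alpha> + b \<alpha>) / 2)) = (x::real) * ((sum a A + sum b A) / 2)"
  by (induct A rule: infinite_finite_induct) (simp_all add: algebra_simps add_divide_distrib)

lemma sum_half2: "(\<Sum>k\<in>K. (a k + b k) / 2) = (sum a K + sum b K) / (2::real)"
  by (induct K rule: infinite_finite_induct) (simp_all add: algebra_simps add_divide_distrib)

lemma ab_le_half: "(a::real) * b \<le> (a\<^sup>2 + b\<^sup>2) / 2"
  using amgm_t[of 1 a b] by simp

context U1op begin

lemma kt_fin_bound:
  assumes B: "hilbert_schmidt B" and C: "hilbert_schmidt C" and t: "t > 0" and S: "finite S"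
  shows "(\<Sum>x\<in>S. norm (kt E (mat_mult B C) m n x)) \<le> (t\<^sup>2 * hsn B + hsn C / t\<^sup>2) / 2"
proof -
  let ?X = "mat_mult B C"
  let ?c = "\<lambda>k \<alpha> p. chc (Mk E k) \<alpha> p"
  define K where "K = fst ` S"
  define A where "A = snd ` S"
  have KA: "finite K" "finite A" using S by (auto simp: K_def A_def)
  have KA3: "S \<subseteq> K \<times> A" unfolding K_def A_def by force
  define K' where "K' = {k \<in> K. k \<le> int m \<and> k \<le> int n}"
  have K': "finite K'" "K' \<subseteq> {k. k \<le> int m}" "K' \<subseteq> {k. k \<le> int n}" using KA by (auto simp: K'_def)
  have "(\<Sum>x\<in>S. norm (kt E ?X m n x)) \<le> (\<Sum>x\<in>K \<times> A. norm (kt E ?X m n x))"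
    by (rule sum_mono2) (use KA KA3 in auto)
  also have "\<dots> = (\<Sum>k\<in>K. \<Sum>\<alpha>\<in>A. norm (kt E ?X m n (k, \<alpha>)))"
    by (simp add: sum.cartesian_product)
  also have "\<dots> \<le> (\<Sum>k\<in>K. if k \<le> int m \<and> k \<le> int n then cmod (?X (nat (int m - k)) (nat (int n - k))) else 0)"
  proof (rule sum_mono)
    fix k assume "k \<in> K"
    show "(\<Sum>\<alpha>\<in>A. norm (kt E ?X m n (k, \<alpha>))) \<le> (if k \<le> int m \<and> k \<le> int n then cmod (?X (nat (int m - k)) (nat (int n - k))) else 0)"
    proof (cases "k \<le> int m \<and> k \<le> int n")
      case True
      let ?p = "nat (int m - k)" and ?q = "nat (int n - k)"
      let ?x = "cmod (?X ?p ?q)"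
      have "(\<Sum>\<alpha>\<in>A. norm (kt E ?X m n (k, \<alpha>))) = (\<Sum>\<alpha>\<in>A. ?x * (cmod (?c k \<alpha> ?p) * cmod (?c k \<alpha> ?q)))"
        using True by (simp add: kt_explicit norm_mult mult_ac)
      also have "\<dots> \<le> (\<Sum>\<alpha>\<in>A. ?x * (((cmod (?c k \<alpha> ?p))\<^sup>2 + (cmod (?c k \<alpha> ?q))\<^sup>2) / 2))"
        by (intro sum_mono mult_left_mono ab_le_half) auto
      also have "\<dots> = ?x * (((\<Sum>\<alpha>\<in>A. (cmod (?c k \<alpha> ?p))\<^sup>2) + (\<Sum>\<alpha>\<in>A. (cmod (?c k \<alpha> ?q))\<^sup>2)) / 2)"
        by (rule sum_half)
      also have "\<dots> \<le> ?x * ((1 + 1) / 2)"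
        using csq_sum_le[OF KA(2), of k ?p] csq_sum_le[OF KA(2), of k ?q]
        by (intro mult_left_mono divide_right_mono add_mono) auto
      finally show ?thesis using True by simp
    next
      case False
      then have z: "kt E ?X m n (k, \<alpha>) = 0" for \<alpha> unfolding kt_explicit by (rule if_not_P)
      show ?thesis unfolding if_not_P[OF False] z by simp
    qed
  qed
  also have "\<dots> = (\<Sum>k\<in>K'. cmod (?X (nat (int m - k)) (nat (int n - k))))"
    unfolding K'_def using KA(1) by (simp add: sum.inter_filter)
  also have "\<dots> \<le> (\<Sum>k\<in>K'. (t\<^sup>2 * rown B (nat (int m - k)) + coln C (nat (int n - k)) / t\<^sup>2) / 2)"
    by (rule sum_mono) (rule mm_entry(2)[OF B C t])
  also have "\<dots> = ((\<Sum>k\<in>K'. t\<^sup>2 * rown B (nat (int m - k))) + (\<Sum>k\<in>K'. coln C (nat (int n - k)) / t\<^sup>2)) / 2"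
    by (rule sum_half2)
  also have "\<dots> = (t\<^sup>2 * (\<Sum>k\<in>K'. rown B (nat (int m - k))) + (\<Sum>k\<in>K'. coln C (nat (int n - k))) / t\<^sup>2) / 2"
    by (simp add: sum_distrib_left sum_divide_distrib)
  also have "\<dots> \<le> (t\<^sup>2 * hsn B + hsn C / t\<^sup>2) / 2"
    using sum_rown_img[OF B K'(1,2)] sum_coln_img[OF C K'(1,3)] t
    by (intro divide_right_mono add_mono mult_left_mono) auto
  finally show ?thesis .
qed

lemma kt_summable:
  assumes B: "hilbert_schmidt B" and C: "hilbert_schmidt C" and t: "t > 0"
  shows "(\<lambda>x. norm (kt E (mat_mult B C) m n x)) summable_on UNIV"
    and "(\<Sum>\<^sub>\<infinity>x. norm (kt E (mat_mult B C) m n x)) \<le> (t\<^sup>2 * hsn B + hsn C / t\<^sup>2) / 2"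
proof -
  show sm: "(\<lambda>x. norm (kt E (mat_mult B C) m n x)) summable_on UNIV"
    by (rule nonneg_bdd_above_summable_on) (auto intro!: bdd_aboveI kt_fin_bound[OF B C t])
  show "(\<Sum>\<^sub>\<infinity>x. norm (kt E (mat_mult B C) m n x)) \<le> (t\<^sup>2 * hsn B + hsn C / t\<^sup>2) / 2"
    by (rule infsum_le_finite_sums[OF sm]) (rule kt_fin_bound[OF B C t])
qed

end



context U1op begin

lemma kt_sum_tc: assumes "trace_class X" shows "kt E X m n summable_on UNIV"
proof -
  obtain B C where B: "hilbert_schmidt B" and C: "hilbert_schmidt C" and X: "X = mat_mult B C"
    using assms unfolding trace_class_def by blast
  show ?thesis unfolding X by (rule abs_summable_summable[OF kt_summable(1)[OF B C, of 1]]) simp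
qed

lemma kt_lin: "kt E (mat_add (mat_scale a A) (mat_scale b B)) m n x = a * kt E A m n x + b * kt E B m n x"
  by (cases x) (simp add: kt_explicit mat_add_def mat_scale_def algebra_simps)

lemma psi_lin: "lin_fun (\<lambda>X. psi E X m n)"
  unfolding lin_fun_def psi_def
proof (intro allI impI)
  fix A B a b assume A: "trace_class A" and B: "trace_class B"
  show "infsum (kt E (mat_add (mat_scale a A) (mat_scale b B)) m n) UNIV = a * infsum (kt E A m n) UNIV + b * infsum (kt E B m n) UNIV"
    unfolding kt_lin
    by (simp add: infsum_add summable_on_cmult_right kt_sum_tc[OF A] kt_sum_tc[OF B] infsum_cmult_right)
qed

lemma psi_unit: "psi E (munit p q) m n = E (munit p q) m n"
proof (cases "int m - int p = int n - int q")
  case False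
  have z: "kt E (munit p q) m n = (\<lambda>_. 0)"
  proof (rule ext)
    fix x :: "int \<times> nat"
    obtain k \<alpha> where x: "x = (k, \<alpha>)" by (cases x)
    show "kt E (munit p q) m n x = 0" unfolding x kt_explicit using False by (auto simp: munit_def)
  qed
  have ne: "int m - int n \<noteq> int p - int q" using False by linarith
  show ?thesis unfolding psi_def z using E_unit_zero[OF ne] by simp
next
  case True
  define k0 where "k0 = int m - int p"
  define h where "h \<alpha> = chc (Mk E k0) \<alpha> p * cnj (chc (Mk E k0) \<alpha> q)" for \<alpha>
  have kt: "kt E (munit p q) m n x = (if fst x = k0 then h (snd x) else 0)" for x
  proof -
    obtain k \<alpha> where x: "x = (k, \<alpha>)" by (cases x)
    show ?thesis unfolding x kt_explicit using True by (auto simp: munit_def h_def k0_def)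
  qed
  have hs: "(h has_sum Mk E k0 p q) UNIV" unfolding h_def by (rule chol[OF Mk_psd])
  have bij: "bij_betw (\<lambda>\<alpha>. (k0, \<alpha>)) UNIV ({k0} \<times> UNIV)" by (rule bij_betwI[where g=snd]) auto
  have "((\<lambda>x. if fst x = k0 then h (snd x) else 0) has_sum Mk E k0 p q) ({k0} \<times> UNIV)"
    using hs has_sum_reindex_bij_betw[OF bij, of "\<lambda>x. if fst x = k0 then h (snd x) else 0"] by simp
  then have "((\<lambda>x. if fst x = k0 then h (snd x) else 0) has_sum Mk E k0 p q) UNIV"
    by (rule has_sum_cong_neutral[THEN iffD1, rotated -1]) auto
  then have "psi E (munit p q) m n = Mk E k0 p q" unfolding psi_def kt by (simp add: infsumI)
  moreover have e1: "int p + k0 = int m" by (simp add: k0_def)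
  moreover have e2: "int q + k0 = int n" using True by (simp add: k0_def)
  ultimately show ?thesis by (simp add: Mk_def)
qed

lemma psi_bound:
  assumes B: "hilbert_schmidt B" and C: "hilbert_schmidt C" and t: "t > 0"
  shows "cmod (psi E (mat_mult B C) m n) \<le> (t\<^sup>2 * hsn B + hsn C / t\<^sup>2) / 2"
  unfolding psi_def
  using norm_infsum_bound[OF kt_summable(1)[OF B C t, where m=m and n=n]] kt_summable(2)[OF B C t, where m=m and n=n] by linarith

lemma main_eq: assumes X: "trace_class X" shows "E X m n = psi E X m n"
proof -
  define D where "D X = E X m n - psi E X m n" for X
  have L: "lin_fun D" unfolding lin_fun_def D_def
  proof (intro allI impI)
    fix A B a b assume A: "trace_class A" and B: "trace_class B"
    have "E (mat_add (mat_scale a A) (mat_scale b B)) m n = a * E A m n + b * E B m n"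
      using linE[OF A B, of a b] by (simp add: mat_add_def mat_scale_def)
    moreover have "psi E (mat_add (mat_scale a A) (mat_scale b B)) m n = a * psi E A m n + b * psi E B m n"
      using psi_lin[unfolded lin_fun_def] A B by blast
    ultimately show "E (mat_add (mat_scale a A) (mat_scale b B)) m n - psi E (mat_add (mat_scale a A) (mat_scale b B)) m n =
       a * (E A m n - psi E A m n) + b * (E B m n - psi E B m n)" by (simp add: algebra_simps)
  qed
  have U: "D (munit p q) = 0" for p q unfolding D_def by (simp add: psi_unit)
  have bd: "cmod (D (mat_mult B C)) \<le> t\<^sup>2 * hsn B + hsn C / t\<^sup>2"
    if B: "hilbert_schmidt B" and C: "hilbert_schmidt C" and t: "t > 0" for B C t
  proof -
    have "cmod (D (mat_mult B C)) \<le> cmod (E (mat_mult B C) m n) + cmod (psi E (mat_mult B C) m n)"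
      unfolding D_def by (rule norm_triangle_ineq4)
    moreover have "cmod (E (mat_mult B C) m n) + cmod (psi E (mat_mult B C) m n) \<le>
        (t\<^sup>2 * hsn B + hsn C / t\<^sup>2) / 2 + (t\<^sup>2 * hsn B + hsn C / t\<^sup>2) / 2"
      by (rule add_mono[OF phi_bound[OF B C t] psi_bound[OF B C t]])
    ultimately show ?thesis by simp
  qed
  have "D X = 0" by (rule approx_zero[OF L U bd X])
  then show ?thesis unfolding D_def by simp
qed

lemma has_sum_main: assumes X: "trace_class X" shows "(kt E X m n has_sum E X m n) UNIV"
  using kt_sum_tc[OF X] main_eq[OF X] unfolding psi_def by (simp add: has_sum_iff)

lemma csq_total: "((\<lambda>k\<alpha>. (cmod (cc E k\<alpha> n))\<^sup>2) has_sum Re (mat_trace (E (munit n n)))) UNIV"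
proof -
  define f where "f x = (cmod (cc E x n))\<^sup>2" for x
  define g where "g k = Re (Mk E k n n)" for k
  have inner: "((\<lambda>\<alpha>. f (k, \<alpha>)) has_sum g k) UNIV" for k
    unfolding f_def g_def cc_def using csq_has_sum[of k n] by simp
  have tcU: "trace_class (E (munit n n))" by (rule tcE[OF unit_tc])
  have diag: "((\<lambda>j. Re (E (munit n n) j j)) has_sum Re (mat_trace (E (munit n n)))) UNIV"
    unfolding mat_trace_def by (rule has_sum_Re[OF has_sum_infsum[OF tc_diag(2)[OF tcU]]])
  have bij: "bij_betw (\<lambda>j. int j - int n) UNIV {k. - int n \<le> k}"
    by (rule bij_betwI[where g="\<lambda>k. nat (k + int n)"]) auto
  have gj: "g (int j - int n) = Re (E (munit n n) j j)" for j by (simp add: g_def Mk_def)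
  have "(g has_sum Re (mat_trace (E (munit n n)))) {k. - int n \<le> k}"
    using has_sum_reindex_bij_betw[OF bij, of g] diag unfolding gj by simp
  then have gs: "(g has_sum Re (mat_trace (E (munit n n)))) UNIV"
    by (rule has_sum_cong_neutral[THEN iffD1, rotated -1]) (auto simp: g_def Mk_def)
  have fnn: "0 \<le> f x" for x by (simp add: f_def)
  have fs: "f summable_on Sigma UNIV (\<lambda>_. UNIV)"
    by (rule summable_on_SigmaI[OF inner has_sum_imp_summable[OF gs]]) (simp add: fnn)
  have "(f has_sum Re (mat_trace (E (munit n n)))) (Sigma UNIV (\<lambda>_. UNIV))"
    by (rule has_sum_SigmaI[OF inner gs fs])
  then show ?thesis unfolding f_def by (simp add: UNIV_Times_UNIV)
qed

lemma tr_unit_le: "Re (mat_trace (E (munit n n))) \<le> 1"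
  using trE[OF unit_tc unit_pos] unit_trace by simp

end

theorem lemma2:
  fixes E :: "mat \<Rightarrow> mat"
  assumes "operation E" and "U1_invariant E"
  shows "\<exists>c :: int \<times> nat \<Rightarrow> nat \<Rightarrow> complex.
    (\<forall>X. trace_class X \<longrightarrow> (\<forall>m n.
       ((\<lambda>(k, \<alpha>). kraus_term (mat_mult (shift_op k) (diag_op (c (k, \<alpha>)))) X m n)
          has_sum E X m n) UNIV)) \<and>
    (\<forall>n. (\<lambda>k\<alpha>. (cmod (c k\<alpha> n))\<^sup>2) summable_on UNIV \<and>
         (\<Sum>\<^sub>\<infinity>k\<alpha>. (cmod (c k\<alpha> n))\<^sup>2) \<le> 1) \<and>
    (trace_preserving E \<longrightarrow> (\<forall>n. (\<Sum>\<^sub>\<infinity>k\<alpha>. (cmod (c k\<alpha> n))\<^sup>2) = 1))"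
proof -
  interpret U1op E using assms by unfold_locales
  show ?thesis
  proof (intro exI[of _ "cc E"] conjI allI impI)
    fix X m n assume X: "trace_class X"
    show "((\<lambda>(k, \<alpha>). kraus_term (mat_mult (shift_op k) (diag_op (cc E (k, \<alpha>)))) X m n) has_sum E X m n) UNIV"
      using has_sum_main[OF X, of m n] unfolding kt_def .
  next
    fix n
    show "(\<lambda>k\<alpha>. (cmod (cc E k\<alpha> n))\<^sup>2) summable_on UNIV" using csq_total[of n] by (rule has_sum_imp_summable)
    show "(\<Sum>\<^sub>\<infinity>k\<alpha>. (cmod (cc E k\<alpha> n))\<^sup>2) \<le> 1" using csq_total[of n] tr_unit_le[of n] by (simp add: infsumI)
  next
    fix n assume tp: "trace_preserving E"
    have "mat_trace (E (munit n n)) = 1" using tp unit_tc unit_trace unfolding trace_preserving_def by simp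
    then show "(\<Sum>\<^sub>\<infinity>k\<alpha>. (cmod (cc E k\<alpha> n))\<^sup>2) = 1" using csq_total[of n] by (simp add: infsumI)
  qed
qed


end
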